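(* Let $\mathbf R\subset\mathbb R^2$ be a region of area $1$ and let $O$ be a point in the interior of $\mathbf R$. Take $O$ as the origin of polar coordinates and assume that $\partial\mathbf R$ is the curve $\{(r(\theta),\theta):\theta\in[0,2\pi]\}$, where $r$ is positive, continuous and piecewise differentiable. Let $\mathcal P$ be the probability that $\triangle ABC$ contains $O$, where $A,B,C$ are independent and uniformly distributed in $\mathbf R$. For $\theta\in[0,2\pi]$, let $H(\theta)=\frac12\int_\theta^{\theta+\pi}r(\phi)^2\,d\phi$; this is the area of the part of $\mathbf R$ lying to the right of the line through the boundary points at angles $\theta$ and $\theta+\pi$. Let $h=\min_\theta H(\theta)$. Then $$\frac14-(1+4h)\Big(\frac12-h\Big)^2\le\mathcal P\le\frac14-2\Big(\frac12-h\Big)^3 .$$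
   Context: The function $r$ is extended $2\pi$-periodically. *)

theory Defs
  imports "HOL-Analysis.Analysis" "HOL-Probability.Probability"
begin

definition polar_region :: "(real \<Rightarrow> real) \<Rightarrow> real \<times> real \<Rightarrow> (real \<times> real) set" where
  "polar_region r p0 = {p0 + (t * cos \<theta>, t * sin \<theta>) | t \<theta>. 0 \<le> \<theta> \<and> \<theta> \<le> 2 * pi \<and> 0 \<le> t \<and> t \<le> r \<theta>}"

definition triangle_prob :: "(real \<times> real) set \<Rightarrow> real \<times> real \<Rightarrow> real" where
  "triangle_prob R p0 =
     (let M = uniform_measure lborel R in
      measure (M \<Otimes>\<^sub>M M \<Otimes>\<^sub>M M) {(a, b, c). p0 \<in> convex hull {a, b, c}})"

definition half_area :: "(real \<Rightarrow> real) \<Rightarrow> real \<Rightarrow> real" where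
  "half_area r \<theta> = integral {\<theta>..\<theta> + pi} (\<lambda>\<phi>. (r \<phi>)\<^sup>2) / 2"

end

theory Submission
  imports Defs
begin

lemma nn_int_Ioi_atan:
  "(\<integral>\<^sup>+s. ennreal (1/(1+s\<^sup>2)) * indicator {a<..} s \<partial>lborel) = ennreal (pi/2 - arctan a)"
proof -
  have "(\<integral>\<^sup>+s. ennreal (1/(1+s\<^sup>2)) * indicator {a<..} s \<partial>lborel) =
        (\<integral>\<^sup>+s\<in>{a..}. ennreal (1/(1+s\<^sup>2)) \<partial>lborel)"
    by (intro nn_integral_cong_AE eventually_mono[OF AE_lborel_singleton[of a]])
       (auto simp: indicator_def)
  also have "\<dots> = ennreal (pi/2 - arctan a)"
  proof (rule nn_integral_FTC_atLeast)
    show "(arctan \<longlongrightarrow> pi/2) at_top" by (rule tendsto_arctan_at_top)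
    show "(arctan has_real_derivative 1 / (1 + x\<^sup>2)) (at x)" for x
      by (auto intro!: derivative_eq_intros simp: power2_eq_square add_nonneg_eq_0_iff divide_inverse)
  qed (auto simp: add_pos_nonneg)
  finally show ?thesis .
qed

lemma nn_int_atan_UNIV:
  "(\<integral>\<^sup>+s. ennreal (1/(1+s\<^sup>2)) \<partial>lborel) = ennreal pi"
proof -
  have m: "(\<lambda>s::real. ennreal (1/(1+s\<^sup>2))) \<in> borel_measurable borel" by measurable
  have "(\<integral>\<^sup>+s. ennreal (1/(1+s\<^sup>2)) \<partial>lborel) =
    (\<integral>\<^sup>+s. ennreal (1/(1+s\<^sup>2)) * indicator {0<..} s + ennreal (1/(1+s\<^sup>2)) * indicator {..<0} s \<partial>lborel)"
    by (intro nn_integral_cong_AE eventually_mono[OF AE_lborel_singleton[of 0]])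
       (auto simp: indicator_def)
  also have "\<dots> = (\<integral>\<^sup>+s. ennreal (1/(1+s\<^sup>2)) * indicator {0<..} s \<partial>lborel) +
     (\<integral>\<^sup>+s. ennreal (1/(1+s\<^sup>2)) * indicator {..<0} s \<partial>lborel)"
    by (rule nn_integral_add) auto
  also have "(\<integral>\<^sup>+s. ennreal (1/(1+s\<^sup>2)) * indicator {..<0} s \<partial>lborel) =
      (\<integral>\<^sup>+s. ennreal (1/(1+s\<^sup>2)) * indicator {0<..} s \<partial>lborel)"
    by (subst nn_integral_real_affine[where c="-1" and t=0]) (auto simp: indicator_def intro!: nn_integral_cong)
  finally show ?thesis using nn_int_Ioi_atan[of 0]
    by (simp flip: ennreal_plus)
qed

lemma distr_atan:
  "distr (density lborel (\<lambda>s. ennreal (1/(1+s\<^sup>2)))) borel arctan =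
   density lborel (indicator {-(pi/2)<..<pi/2})"
proof (rule measure_eqI_lessThan)
  fix x :: real
  have L: "emeasure (distr (density lborel (\<lambda>s. ennreal (1/(1+s\<^sup>2)))) borel arctan) {x<..} =
      (\<integral>\<^sup>+s. ennreal (1/(1+s\<^sup>2)) * indicator {s. x < arctan s} s \<partial>lborel)"
    by (subst emeasure_distr) (auto simp: emeasure_density vimage_def Int_def intro!: nn_integral_cong)
  have R: "emeasure (density lborel (indicator {-(pi/2)<..<pi/2})) {x<..} =
      emeasure lborel ({-(pi/2)<..<pi/2} \<inter> {x<..})"
    by (subst emeasure_density) (auto simp: indicator_inter_arith[symmetric] intro!: nn_integral_cong)
  have "emeasure (distr (density lborel (\<lambda>s. ennreal (1/(1+s\<^sup>2)))) borel arctan) {x<..} =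
        emeasure (density lborel (indicator {-(pi/2)<..<pi/2})) {x<..} \<and>
        emeasure (distr (density lborel (\<lambda>s. ennreal (1/(1+s\<^sup>2)))) borel arctan) {x<..} < \<infinity>"
  proof (cases "x \<ge> pi/2")
    case True
    then have "{s. x < arctan s} = {}" using arctan_ubound by (auto intro: less_trans[OF _ less_le_trans] )
      (smt (verit) arctan_ubound)
    moreover have "{-(pi/2)<..<pi/2} \<inter> {x<..} = {}" using True by auto
    ultimately show ?thesis unfolding L R by simp
  next
    case False
    show ?thesis
    proof (cases "x \<le> -(pi/2)")
      case True
      then have "{s. x < arctan s} = UNIV" using arctan_lbound by (auto intro: le_less_trans)
      moreover have "{-(pi/2)<..<pi/2} \<inter> {x<..} = {-(pi/2)<..<pi/2}" using True by auto
      ultimately show ?thesis unfolding L R using nn_int_atan_UNIV by simp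
    next
      case False2: False
      have "{s. x < arctan s} = {tan x<..}"
      proof -
        have "x < arctan s \<longleftrightarrow> tan x < s" for s
          using False False2 by (metis arctan_less_iff arctan_tan linorder_not_le minus_divide_left)
        then show ?thesis by auto
      qed
      moreover have "{-(pi/2)<..<pi/2} \<inter> {x<..} = {x<..<pi/2}" using False False2 by auto
      moreover have "arctan (tan x) = x" using False False2 by (intro arctan_tan) auto
      ultimately show ?thesis unfolding L R using nn_int_Ioi_atan[of "tan x"] False by simp
    qed
  qed
  then show "emeasure (distr (density lborel (\<lambda>s. ennreal (1/(1+s\<^sup>2)))) borel arctan) {x<..} < \<infinity>"
    "emeasure (distr (density lborel (\<lambda>s. ennreal (1/(1+s\<^sup>2)))) borel arctan) {x<..} =
        emeasure (density lborel (indicator {-(pi/2)<..<pi/2})) {x<..}" by auto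
qed auto

lemma nn_int_atan_subst:
  assumes [measurable]: "K \<in> borel_measurable borel"
  shows "(\<integral>\<^sup>+s. ennreal (1/(1+s\<^sup>2)) * K (arctan s) \<partial>lborel) =
         (\<integral>\<^sup>+\<theta>. indicator {-(pi/2)<..<pi/2} \<theta> * K \<theta> \<partial>lborel)"
proof -
  have "(\<integral>\<^sup>+s. ennreal (1/(1+s\<^sup>2)) * K (arctan s) \<partial>lborel) =
      (\<integral>\<^sup>+s. K (arctan s) \<partial>density lborel (\<lambda>s. ennreal (1/(1+s\<^sup>2))))"
    by (subst nn_integral_density) auto
  also have "\<dots> = (\<integral>\<^sup>+\<theta>. K \<theta> \<partial>distr (density lborel (\<lambda>s. ennreal (1/(1+s\<^sup>2)))) borel arctan)"
    by (subst nn_integral_distr) auto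
  also have "\<dots> = (\<integral>\<^sup>+\<theta>. indicator {-(pi/2)<..<pi/2} \<theta> * K \<theta> \<partial>lborel)"
    unfolding distr_atan by (subst nn_integral_density) auto
  finally show ?thesis .
qed

definition Kp :: "(real \<times> real \<Rightarrow> ennreal) \<Rightarrow> real \<Rightarrow> ennreal" where
  "Kp F \<theta> = (\<integral>\<^sup>+t. indicator {0<..} t * ennreal t * F (t * cos \<theta>, t * sin \<theta>) \<partial>lborel)"

lemma Kp_meas[measurable]:
  assumes [measurable]: "F \<in> borel_measurable borel"
  shows "Kp F \<in> borel_measurable borel"
  unfolding Kp_def by measurable

lemma ray_subst:
  assumes [measurable]: "F \<in> borel_measurable borel" and "c \<noteq> 0"
  shows "(\<integral>\<^sup>+u. F u \<partial>lborel) = ennreal \<bar>c\<bar> * (\<integral>\<^sup>+t. F (c * t) \<partial>lborel)"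
  using nn_integral_real_affine[of F c 0] assms by simp

lemma polar_half1:
  assumes [measurable]: "F \<in> borel_measurable borel"
  shows "(\<integral>\<^sup>+u. indicator {0<..} u * ennreal u * F (u, u * s) \<partial>lborel) =
     ennreal (1/(1+s\<^sup>2)) * Kp F (arctan s)"
proof -
  define c where "c = 1 / sqrt (1 + s\<^sup>2)"
  have c: "c > 0" unfolding c_def by (simp add: add_pos_nonneg)
  have cc: "c * c = 1/(1+s\<^sup>2)" unfolding c_def
    by (simp add: add_pos_nonneg real_sqrt_mult[symmetric] power2_eq_square flip: real_sqrt_mult)
  have "(\<integral>\<^sup>+u. indicator {0<..} u * ennreal u * F (u, u * s) \<partial>lborel) =
     ennreal c * (\<integral>\<^sup>+t. indicator {0<..} (c*t) * ennreal (c*t) * F (c*t, c*t * s) \<partial>lborel)"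
    using ray_subst[of "\<lambda>u. indicator {0<..} u * ennreal u * F (u, u * s)" c] c by simp
  also have "\<dots> = (\<integral>\<^sup>+t. ennreal (c*c) * (indicator {0<..} t * ennreal t * F (t * cos (arctan s), t * sin (arctan s))) \<partial>lborel)"
  proof (subst nn_integral_cmult[symmetric], simp, intro nn_integral_cong)
    fix t :: real
    have e: "ennreal c * ennreal (c*t) = ennreal (c*c) * ennreal t" if "t > 0"
      using c that by (simp add: ennreal_mult'[symmetric] mult_ac)
    have s: "t * s / sqrt (1 + s\<^sup>2) = t * (c * s)" "t / sqrt (1 + s\<^sup>2) = t * c" by (simp_all add: c_def)
    show "ennreal c * (indicator {0<..} (c*t) * ennreal (c*t) * F (c*t, c*t * s)) =
      ennreal (c*c) * (indicator {0<..} t * ennreal t * F (t * cos (arctan s), t * sin (arctan s)))"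
    proof (cases "t > 0")
      case True
      have a: "F (c*t, c*t * s) = F (t * cos (arctan s), t * sin (arctan s))"
        using s by (simp add: cos_arctan sin_arctan mult_ac)
      have "ennreal c * (indicator {0<..} (c*t) * ennreal (c*t) * F (c*t, c*t * s)) =
          (ennreal c * ennreal (c*t)) * F (c*t, c*t * s)" using c True by (simp add: mult.assoc)
      also have "\<dots> = ennreal (c*c) * (indicator {0<..} t * ennreal t * F (t * cos (arctan s), t * sin (arctan s)))"
        using True by (simp only: e a) (simp add: mult.assoc)
      finally show ?thesis .
    qed (use c in \<open>simp add: indicator_def zero_less_mult_iff\<close>)
  qed
  also have "\<dots> = ennreal (1/(1+s\<^sup>2)) * Kp F (arctan s)"
    unfolding Kp_def cc by (subst nn_integral_cmult) auto
  finally show ?thesis .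
qed

lemma polar_half2:
  assumes [measurable]: "F \<in> borel_measurable borel"
  shows "(\<integral>\<^sup>+u. indicator {..<0} u * ennreal (-u) * F (u, u * s) \<partial>lborel) =
     ennreal (1/(1+s\<^sup>2)) * Kp F (arctan s + pi)"
proof -
  define c where "c = 1 / sqrt (1 + s\<^sup>2)"
  have c: "c > 0" unfolding c_def by (simp add: add_pos_nonneg)
  have cc: "c * c = 1/(1+s\<^sup>2)" unfolding c_def
    by (simp add: add_pos_nonneg real_sqrt_mult[symmetric] power2_eq_square flip: real_sqrt_mult)
  have "(\<integral>\<^sup>+u. indicator {..<0} u * ennreal (-u) * F (u, u * s) \<partial>lborel) =
     ennreal c * (\<integral>\<^sup>+t. indicator {..<0} (-c*t) * ennreal (-(-c*t)) * F (-c*t, -c*t * s) \<partial>lborel)"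
    using ray_subst[of "\<lambda>u. indicator {..<0} u * ennreal (-u) * F (u, u * s)" "-c"] c by simp
  also have "\<dots> = (\<integral>\<^sup>+t. ennreal (c*c) * (indicator {0<..} t * ennreal t * F (t * cos (arctan s + pi), t * sin (arctan s + pi))) \<partial>lborel)"
  proof (subst nn_integral_cmult[symmetric], simp, intro nn_integral_cong)
    fix t :: real
    have e: "ennreal c * ennreal (c*t) = ennreal (c*c) * ennreal t" if "t > 0"
      using c that by (simp add: ennreal_mult'[symmetric] mult_ac)
    have s: "t * s / sqrt (1 + s\<^sup>2) = t * (c * s)" "t / sqrt (1 + s\<^sup>2) = t * c" by (simp_all add: c_def)
    show "ennreal c * (indicator {..<0} (-c*t) * ennreal (-(-c*t)) * F (-c*t, -c*t * s)) =
      ennreal (c*c) * (indicator {0<..} t * ennreal t * F (t * cos (arctan s + pi), t * sin (arctan s + pi)))"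
    proof (cases "t > 0")
      case True
      have a: "F (-c*t, -c*t * s) = F (t * cos (arctan s + pi), t * sin (arctan s + pi))"
        using s by (simp add: cos_arctan sin_arctan mult_ac)
      have "ennreal c * (indicator {..<0} (-c*t) * ennreal (-(-c*t)) * F (-c*t, -c*t * s)) =
          (ennreal c * ennreal (c*t)) * F (-c*t, -c*t * s)" using c True by (simp add: mult.assoc)
      also have "\<dots> = ennreal (c*c) * (indicator {0<..} t * ennreal t * F (t * cos (arctan s + pi), t * sin (arctan s + pi)))"
        using True by (simp only: e a) (simp add: mult.assoc)
      finally show ?thesis .
    qed (use c in \<open>simp add: indicator_def mult_less_0_iff zero_less_mult_iff\<close>)
  qed
  also have "\<dots> = ennreal (1/(1+s\<^sup>2)) * Kp F (arctan s + pi)"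
    unfolding Kp_def cc by (subst nn_integral_cmult) auto
  finally show ?thesis .
qed

lemma polar_nn:
  fixes F :: "real \<times> real \<Rightarrow> ennreal"
  assumes [measurable]: "F \<in> borel_measurable borel"
  shows "(\<integral>\<^sup>+z. F z \<partial>lborel) = (\<integral>\<^sup>+\<theta>. indicator {-(pi/2)<..<3*pi/2} \<theta> * Kp F \<theta> \<partial>lborel)"
proof -
  have "(\<integral>\<^sup>+z. F z \<partial>lborel) = (\<integral>\<^sup>+u. \<integral>\<^sup>+v. F (u,v) \<partial>lborel \<partial>lborel)"
  proof -
    have m: "F \<in> borel_measurable (lborel \<Otimes>\<^sub>M lborel)" by (simp add: lborel_prod)
    show ?thesis by (subst lborel_prod[symmetric]) (rule lborel.nn_integral_fst[OF m, symmetric])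
  qed
  also have "\<dots> = (\<integral>\<^sup>+u. indicator {0<..} u * (ennreal u * (\<integral>\<^sup>+s. F (u, u * s) \<partial>lborel)) +
       indicator {..<0} u * (ennreal (-u) * (\<integral>\<^sup>+s. F (u, u * s) \<partial>lborel)) \<partial>lborel)"
  proof (intro nn_integral_cong_AE eventually_mono[OF AE_lborel_singleton[of 0]] impI)
    fix u :: real assume "u \<noteq> 0"
    then have "(\<integral>\<^sup>+v. F (u,v) \<partial>lborel) = ennreal \<bar>u\<bar> * (\<integral>\<^sup>+s. F (u, u * s) \<partial>lborel)"
      by (intro ray_subst) auto
    with \<open>u \<noteq> 0\<close> show "(\<integral>\<^sup>+v. F (u,v) \<partial>lborel) = indicator {0<..} u * (ennreal u * (\<integral>\<^sup>+s. F (u, u * s) \<partial>lborel)) +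
       indicator {..<0} u * (ennreal (-u) * (\<integral>\<^sup>+s. F (u, u * s) \<partial>lborel))"
      by (auto simp: indicator_def)
  qed
  also have "\<dots> = (\<integral>\<^sup>+u. indicator {0<..} u * (ennreal u * (\<integral>\<^sup>+s. F (u, u * s) \<partial>lborel)) \<partial>lborel) +
       (\<integral>\<^sup>+u. indicator {..<0} u * (ennreal (-u) * (\<integral>\<^sup>+s. F (u, u * s) \<partial>lborel)) \<partial>lborel)"
    by (rule nn_integral_add) auto
  also have "(\<integral>\<^sup>+u. indicator {0<..} u * (ennreal u * (\<integral>\<^sup>+s. F (u, u * s) \<partial>lborel)) \<partial>lborel) =
      (\<integral>\<^sup>+u. \<integral>\<^sup>+s. indicator {0<..} u * ennreal u * F (u, u * s) \<partial>lborel \<partial>lborel)"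
    by (subst nn_integral_cmult[symmetric], simp)+ (simp add: mult.assoc)
  also have "\<dots> = (\<integral>\<^sup>+s. \<integral>\<^sup>+u. indicator {0<..} u * ennreal u * F (u, u * s) \<partial>lborel \<partial>lborel)"
    by (rule lborel_pair.Fubini') simp
  also have "\<dots> = (\<integral>\<^sup>+s. ennreal (1/(1+s\<^sup>2)) * Kp F (arctan s) \<partial>lborel)"
    by (intro nn_integral_cong polar_half1) simp
  also have "\<dots> = (\<integral>\<^sup>+\<theta>. indicator {-(pi/2)<..<pi/2} \<theta> * Kp F \<theta> \<partial>lborel)"
    by (rule nn_int_atan_subst) simp
  also have "(\<integral>\<^sup>+u. indicator {..<0} u * (ennreal (-u) * (\<integral>\<^sup>+s. F (u, u * s) \<partial>lborel)) \<partial>lborel) =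
      (\<integral>\<^sup>+u. \<integral>\<^sup>+s. indicator {..<0} u * ennreal (-u) * F (u, u * s) \<partial>lborel \<partial>lborel)"
    by (subst nn_integral_cmult[symmetric], simp)+ (simp add: mult.assoc)
  also have "\<dots> = (\<integral>\<^sup>+s. \<integral>\<^sup>+u. indicator {..<0} u * ennreal (-u) * F (u, u * s) \<partial>lborel \<partial>lborel)"
    by (rule lborel_pair.Fubini') simp
  also have "\<dots> = (\<integral>\<^sup>+s. ennreal (1/(1+s\<^sup>2)) * Kp F (arctan s + pi) \<partial>lborel)"
    by (intro nn_integral_cong polar_half2) simp
  also have "\<dots> = (\<integral>\<^sup>+\<theta>. indicator {-(pi/2)<..<pi/2} \<theta> * Kp F (\<theta> + pi) \<partial>lborel)"
    by (rule nn_int_atan_subst[where K="\<lambda>\<theta>. Kp F (\<theta> + pi)"]) simp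
  also have "\<dots> = (\<integral>\<^sup>+\<theta>. indicator {pi/2<..<3*pi/2} \<theta> * Kp F \<theta> \<partial>lborel)"
  proof -
    have ind: "\<And>x. indicator {pi/2<..<3*pi/2} (x + pi) = (indicator {-(pi/2)<..<pi/2} x :: ennreal)"
      by (auto simp: indicator_def)
    show ?thesis
      using nn_integral_real_affine[of "\<lambda>\<theta>. indicator {pi/2<..<3*pi/2} \<theta> * Kp F \<theta>" 1 pi]
      by (simp add: ind add.commute)
  qed
  also have "(\<integral>\<^sup>+\<theta>. indicator {-(pi/2)<..<pi/2} \<theta> * Kp F \<theta> \<partial>lborel) +
     (\<integral>\<^sup>+\<theta>. indicator {pi/2<..<3*pi/2} \<theta> * Kp F \<theta> \<partial>lborel) =
     (\<integral>\<^sup>+\<theta>. indicator {-(pi/2)<..<pi/2} \<theta> * Kp F \<theta> + indicator {pi/2<..<3*pi/2} \<theta> * Kp F \<theta> \<partial>lborel)"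
    by (rule nn_integral_add[symmetric]) auto
  also have "\<dots> = (\<integral>\<^sup>+\<theta>. indicator {-(pi/2)<..<3*pi/2} \<theta> * Kp F \<theta> \<partial>lborel)"
    by (intro nn_integral_cong_AE eventually_mono[OF AE_lborel_singleton[of "pi/2"]])
       (auto simp: indicator_def)
  finally show ?thesis .
qed

definition cr :: "real \<times> real \<Rightarrow> real \<times> real \<Rightarrow> real" where
  "cr u v = fst u * snd v - snd u * fst v"

lemma cr_meas[measurable]:
  assumes "f \<in> borel_measurable M" "g \<in> borel_measurable M"
  shows "(\<lambda>x. cr (f x) (g x)) \<in> borel_measurable M"
proof -
  have fs: "fst \<in> borel_measurable (borel :: (real \<times> real) measure)" "snd \<in> borel_measurable (borel :: (real \<times> real) measure)"
    by (intro borel_measurable_continuous_onI continuous_intros)+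
  have "(\<lambda>x. fst (f x)) \<in> borel_measurable M" "(\<lambda>x. snd (f x)) \<in> borel_measurable M"
    "(\<lambda>x. fst (g x)) \<in> borel_measurable M" "(\<lambda>x. snd (g x)) \<in> borel_measurable M"
    using measurable_compose[OF assms(1) fs(1)] measurable_compose[OF assms(1) fs(2)]
      measurable_compose[OF assms(2) fs(1)] measurable_compose[OF assms(2) fs(2)] by (simp_all add: o_def)
  then show ?thesis unfolding cr_def by (intro borel_measurable_diff borel_measurable_times)
qed

lemma cr_polar: "cr (s * cos a, s * sin a) (t * cos b, t * sin b) = s * t * sin (b - a)"
  unfolding cr_def by (simp add: sin_diff algebra_simps)

lemma shift_period:
  fixes h :: "real \<Rightarrow> ennreal"
  assumes [measurable]: "h \<in> borel_measurable borel" and per: "\<And>\<theta>. h (\<theta> + 2*pi) = h \<theta>"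
    and ab: "a \<le> b" "b \<le> a + 2*pi"
  shows "(\<integral>\<^sup>+\<theta>. indicator {a<..<a+2*pi} \<theta> * h \<theta> \<partial>lborel) = (\<integral>\<^sup>+\<theta>. indicator {b<..<b+2*pi} \<theta> * h \<theta> \<partial>lborel)"
proof -
  have "(\<integral>\<^sup>+\<theta>. indicator {a<..<a+2*pi} \<theta> * h \<theta> \<partial>lborel) =
      (\<integral>\<^sup>+\<theta>. indicator {a<..<b} \<theta> * h \<theta> + indicator {b<..<a+2*pi} \<theta> * h \<theta> \<partial>lborel)"
    using ab by (intro nn_integral_cong_AE eventually_mono[OF AE_lborel_singleton[of b]])
       (auto simp: indicator_def)
  also have "\<dots> = (\<integral>\<^sup>+\<theta>. indicator {a<..<b} \<theta> * h \<theta> \<partial>lborel) + (\<integral>\<^sup>+\<theta>. indicator {b<..<a+2*pi} \<theta> * h \<theta> \<partial>lborel)"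
    by (rule nn_integral_add) auto
  also have "(\<integral>\<^sup>+\<theta>. indicator {a<..<b} \<theta> * h \<theta> \<partial>lborel) =
      (\<integral>\<^sup>+\<theta>. indicator {a+2*pi<..<b+2*pi} \<theta> * h \<theta> \<partial>lborel)"
  proof -
    have ind: "\<And>x. indicator {a+2*pi<..<b+2*pi} (x + 2*pi) = (indicator {a<..<b} x :: ennreal)"
      by (auto simp: indicator_def)
    show ?thesis
      using nn_integral_real_affine[of "\<lambda>\<theta>. indicator {a+2*pi<..<b+2*pi} \<theta> * h \<theta>" 1 "2*pi"]
      by (simp add: ind add.commute per)
  qed
  also have "(\<integral>\<^sup>+\<theta>. indicator {a+2*pi<..<b+2*pi} \<theta> * h \<theta> \<partial>lborel) + (\<integral>\<^sup>+\<theta>. indicator {b<..<a+2*pi} \<theta> * h \<theta> \<partial>lborel)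
     = (\<integral>\<^sup>+\<theta>. indicator {a+2*pi<..<b+2*pi} \<theta> * h \<theta> + indicator {b<..<a+2*pi} \<theta> * h \<theta> \<partial>lborel)"
    by (rule nn_integral_add[symmetric]) auto
  also have "\<dots> = (\<integral>\<^sup>+\<theta>. indicator {b<..<b+2*pi} \<theta> * h \<theta> \<partial>lborel)"
    using ab by (intro nn_integral_cong_AE eventually_mono[OF AE_lborel_singleton[of "a+2*pi"]])
       (auto simp: indicator_def)
  finally show ?thesis by (simp add: add.commute)
qed

lemma nn_Ioo_integral:
  fixes q :: "real \<Rightarrow> real"
  assumes "continuous_on {a..b} q" "\<And>x. x \<in> {a..b} \<Longrightarrow> q x \<ge> 0"
  shows "(\<integral>\<^sup>+\<theta>. indicator {a<..<b} \<theta> * ennreal (q \<theta>) \<partial>lborel) = ennreal (integral {a..b} q)"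
proof -
  have "(\<integral>\<^sup>+\<theta>. indicator {a<..<b} \<theta> * ennreal (q \<theta>) \<partial>lborel) = (\<integral>\<^sup>+\<theta>\<in>{a..b}. ennreal (q \<theta>) \<partial>lborel)"
    by (intro nn_integral_cong_AE eventually_mono[OF eventually_conj[OF AE_lborel_singleton[of a] AE_lborel_singleton[of b]]])
       (auto simp: indicator_def)
  also have "\<dots> = ennreal (integral {a..b} q)"
    by (rule nn_integral_has_integral_lebesgue') (use assms in \<open>auto intro!: integrable_continuous_interval\<close>)
  finally show ?thesis .
qed

locale setting =
  fixes r :: "real \<Rightarrow> real" and p0 :: "real \<times> real"
  assumes pos: "\<And>\<theta>. r \<theta> > 0"
    and periodic: "\<And>\<theta>. r (\<theta> + 2 * pi) = r \<theta>"
    and cont: "continuous_on UNIV r"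
begin

abbreviation "R \<equiv> polar_region r p0"

definition f :: "real \<Rightarrow> real" where "f \<theta> = (r \<theta>)\<^sup>2 / 2"

lemma f_cont: "continuous_on S f"
  unfolding f_def by (intro continuous_intros continuous_on_subset[OF cont]) auto

lemma f_nonneg: "f \<theta> \<ge> 0" unfolding f_def by simp

lemma f_periodic: "f (\<theta> + 2*pi) = f \<theta>" unfolding f_def periodic ..

lemma r_meas[measurable]: "r \<in> borel_measurable borel"
  using cont by (intro borel_measurable_continuous_onI) 

lemma f_meas[measurable]: "f \<in> borel_measurable borel"
  unfolding f_def by measurable

lemma r_nat: "r (\<theta> + 2*pi*real n) = r \<theta>"
proof (induction n)
  case (Suc n)
  then show ?case using periodic[of "\<theta> + 2*pi*real n"] by (simp add: algebra_simps)
qed simp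

lemma r_int: "r (\<theta> + 2*pi*real_of_int k) = r \<theta>"
proof (cases "k \<ge> 0")
  case True then show ?thesis using r_nat[of \<theta> "nat k"] by simp
next
  case False
  then show ?thesis using r_nat[of "\<theta> + 2*pi*real_of_int k" "nat (-k)"] by simp
qed

lemma mem_R:
  assumes "t > 0"
  shows "p0 + (t * cos \<theta>, t * sin \<theta>) \<in> R \<longleftrightarrow> t \<le> r \<theta>"
proof
  assume "p0 + (t * cos \<theta>, t * sin \<theta>) \<in> R"
  then obtain s \<phi> where s: "0 \<le> \<phi>" "\<phi> \<le> 2*pi" "0 \<le> s" "s \<le> r \<phi>"
     and eq: "(t * cos \<theta>, t * sin \<theta>) = (s * cos \<phi>, s * sin \<phi>)"
    unfolding polar_region_def by auto
  from eq have e1: "t * cos \<theta> = s * cos \<phi>" and e2: "t * sin \<theta> = s * sin \<phi>" by auto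
  have "(t * cos \<theta>)\<^sup>2 + (t * sin \<theta>)\<^sup>2 = (s * cos \<phi>)\<^sup>2 + (s * sin \<phi>)\<^sup>2" using e1 e2 by simp
  then have "t\<^sup>2 = s\<^sup>2" by (simp add: power_mult_distrib flip: distrib_left)
  then have ts: "t = s" using assms s by (simp add: power2_eq_iff_nonneg)
  then have "cos \<theta> = cos \<phi>" "sin \<theta> = sin \<phi>" using e1 e2 assms by auto
  then obtain k where "\<theta> = \<phi> + 2*pi*real_of_int k" using sin_cos_eq_iff[of \<theta> \<phi>] by auto
  then have "r \<theta> = r \<phi>" using r_int by simp
  then show "t \<le> r \<theta>" using s ts by simp
next
  assume le: "t \<le> r \<theta>"
  define k where "k = \<lfloor>\<theta> / (2*pi)\<rfloor>"
  define \<phi> where "\<phi> = \<theta> - 2*pi*real_of_int k"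
  have "real_of_int k \<le> \<theta> / (2*pi)" "\<theta> / (2*pi) < real_of_int k + 1" unfolding k_def by linarith+
  then have \<phi>: "0 \<le> \<phi>" "\<phi> \<le> 2*pi" unfolding \<phi>_def by (simp_all add: field_simps)
  have "\<theta> = \<phi> + 2*pi*real_of_int k" unfolding \<phi>_def by simp
  then have c: "cos \<theta> = cos \<phi>" "sin \<theta> = sin \<phi>" "r \<theta> = r \<phi>"
    using sin_cos_eq_iff[of \<theta> \<phi>] r_int by auto
  show "p0 + (t * cos \<theta>, t * sin \<theta>) \<in> R"
    unfolding polar_region_def
    by (rule CollectI, rule exI[of _ t], rule exI[of _ \<phi>]) (use \<phi> le assms c in simp)
qed

lemma R_compact: "compact R"
proof -
  have "compact (r ` {0..2*pi})"
    by (rule compact_continuous_image[OF continuous_on_subset[OF cont]]) auto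
  then obtain B where B0: "\<forall>x \<in> r ` {0..2*pi}. \<bar>x\<bar> \<le> B"
    using compact_imp_bounded bounded_real by blast
  then have B: "\<And>\<theta>. \<theta> \<in> {0..2*pi} \<Longrightarrow> r \<theta> \<le> B" by force
  define S where "S = {z :: real \<times> real. 0 \<le> snd z \<and> snd z \<le> 2*pi \<and> 0 \<le> fst z \<and> fst z \<le> r (snd z)}"
  have cS: "closed S" unfolding S_def
    by (intro closed_Collect_conj closed_Collect_le continuous_intros continuous_on_compose2[OF cont]) auto
  have "S \<subseteq> cbox (0, 0) (B, 2*pi)"
  proof
    fix z assume "z \<in> S"
    then have "fst z \<le> B" using B[of "snd z"] unfolding S_def by auto
    with \<open>z \<in> S\<close> show "z \<in> cbox (0, 0) (B, 2*pi)" unfolding S_def by (cases z) (auto simp: cbox_Pair_iff)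
  qed
  then have "bounded S" using bounded_cbox bounded_subset by blast
  then have cpS: "compact S" using cS compact_eq_bounded_closed by blast
  have eq: "R = (\<lambda>z. p0 + (fst z * cos (snd z), fst z * sin (snd z))) ` S"
  proof (intro set_eqI iffI)
    fix x assume "x \<in> R"
    then obtain t \<theta> where "x = p0 + (t * cos \<theta>, t * sin \<theta>)" "0 \<le> \<theta>" "\<theta> \<le> 2 * pi" "0 \<le> t" "t \<le> r \<theta>"
      unfolding polar_region_def by blast
    then show "x \<in> (\<lambda>z. p0 + (fst z * cos (snd z), fst z * sin (snd z))) ` S"
      unfolding S_def by (intro image_eqI[where x="(t,\<theta>)"]) auto
  next
    fix x assume "x \<in> (\<lambda>z. p0 + (fst z * cos (snd z), fst z * sin (snd z))) ` S"
    then obtain t \<theta> where "x = p0 + (t * cos \<theta>, t * sin \<theta>)" "0 \<le> \<theta>" "\<theta> \<le> 2 * pi" "0 \<le> t" "t \<le> r \<theta>"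
      unfolding S_def by auto
    then show "x \<in> R" unfolding polar_region_def by blast
  qed
  have "continuous_on S (\<lambda>z. p0 + (fst z * cos (snd z), fst z * sin (snd z)))"
    by (intro continuous_intros)
  then show ?thesis unfolding eq by (rule compact_continuous_image[OF _ cpS])
qed

lemma R_sets[measurable]: "R \<in> sets borel"
  using R_compact by (simp add: borel_compact)

end

lemma per_nat: assumes "\<And>x. h (x + 2*pi) = h x" shows "h (x + 2*pi*real n) = h x"
proof (induction n)
  case (Suc n)
  then show ?case using assms[of "x + 2*pi*real n"] by (simp add: algebra_simps)
qed simp

lemma per_int: assumes "\<And>x. h (x + 2*pi) = h x" shows "h (x + 2*pi*real_of_int k) = h x"
proof (cases "k \<ge> 0")
  case True then show ?thesis using per_nat[where h=h, OF assms, of x "nat k"] by simp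
next
  case False
  then show ?thesis using per_nat[where h=h, OF assms, of "x + 2*pi*real_of_int k" "nat (-k)"] by simp
qed

lemma shift_translate:
  fixes h :: "real \<Rightarrow> ennreal"
  assumes [measurable]: "h \<in> borel_measurable borel" and per: "\<And>\<theta>. h (\<theta> + c) = h \<theta>"
  shows "(\<integral>\<^sup>+\<theta>. indicator {a<..<a+2*pi} \<theta> * h \<theta> \<partial>lborel) = (\<integral>\<^sup>+\<theta>. indicator {a+c<..<a+c+2*pi} \<theta> * h \<theta> \<partial>lborel)"
proof -
  have ind: "\<And>x. indicator {a+c<..<a+c+2*pi} (x + c) = (indicator {a<..<a+2*pi} x :: ennreal)"
    by (auto simp: indicator_def)
  show ?thesis
    using nn_integral_real_affine[of "\<lambda>\<theta>. indicator {a+c<..<a+c+2*pi} \<theta> * h \<theta>" 1 c]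
    by (simp add: ind add.commute per)
qed

lemma shift_period_gen:
  fixes h :: "real \<Rightarrow> ennreal"
  assumes [measurable]: "h \<in> borel_measurable borel" and per: "\<And>\<theta>. h (\<theta> + 2*pi) = h \<theta>"
  shows "(\<integral>\<^sup>+\<theta>. indicator {a<..<a+2*pi} \<theta> * h \<theta> \<partial>lborel) = (\<integral>\<^sup>+\<theta>. indicator {b<..<b+2*pi} \<theta> * h \<theta> \<partial>lborel)"
proof -
  define k where "k = \<lfloor>(b - a) / (2*pi)\<rfloor>"
  define b' where "b' = b - 2*pi*real_of_int k"
  have "real_of_int k \<le> (b - a) / (2*pi)" "(b - a) / (2*pi) < real_of_int k + 1" unfolding k_def by linarith+
  then have b': "a \<le> b'" "b' \<le> a + 2*pi" unfolding b'_def by (simp_all add: field_simps)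
  have "(\<integral>\<^sup>+\<theta>. indicator {a<..<a+2*pi} \<theta> * h \<theta> \<partial>lborel) = (\<integral>\<^sup>+\<theta>. indicator {b'<..<b'+2*pi} \<theta> * h \<theta> \<partial>lborel)"
    by (rule shift_period[OF assms b'])
  also have "\<dots> = (\<integral>\<^sup>+\<theta>. indicator {b'+2*pi*real_of_int k<..<b'+2*pi*real_of_int k+2*pi} \<theta> * h \<theta> \<partial>lborel)"
    by (rule shift_translate) (use per_int[where h=h, OF per] in auto)
  finally show ?thesis unfolding b'_def by simp
qed

context setting
begin

lemma polar_at:
  assumes [measurable]: "G \<in> borel_measurable borel"
  shows "(\<integral>\<^sup>+x. G x \<partial>lborel) = (\<integral>\<^sup>+\<theta>. indicator {-(pi/2)<..<3*pi/2} \<theta> * Kp (\<lambda>z. G (p0 + z)) \<theta> \<partial>lborel)"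
proof -
  have "(\<integral>\<^sup>+x. G x \<partial>lborel) = (\<integral>\<^sup>+x. G x \<partial>distr lborel borel ((+) p0))"
    by (simp add: lborel_distr_plus)
  also have "\<dots> = (\<integral>\<^sup>+z. G (p0 + z) \<partial>lborel)"
    by (subst nn_integral_distr) auto
  also have "\<dots> = (\<integral>\<^sup>+\<theta>. indicator {-(pi/2)<..<3*pi/2} \<theta> * Kp (\<lambda>z. G (p0 + z)) \<theta> \<partial>lborel)"
    by (rule polar_nn) simp
  finally show ?thesis .
qed

lemma Kp_ray:
  assumes "\<And>t. t > 0 \<Longrightarrow> G (p0 + (t * cos \<theta>, t * sin \<theta>)) = indicator {..r \<theta>} t * c"
  shows "Kp (\<lambda>z. G (p0 + z)) \<theta> = ennreal (f \<theta>) * c"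
proof -
  have "Kp (\<lambda>z. G (p0 + z)) \<theta> = (\<integral>\<^sup>+t. (indicator {0..r \<theta>} t * ennreal t) * c \<partial>lborel)"
    unfolding Kp_def
    by (intro nn_integral_cong_AE eventually_mono[OF AE_lborel_singleton[of 0]])
       (auto simp: indicator_def assms)
  also have "\<dots> = (\<integral>\<^sup>+t\<in>{0..r \<theta>}. ennreal t \<partial>lborel) * c"
    by (subst nn_integral_multc) (auto simp: mult.commute)
  also have "(\<integral>\<^sup>+t\<in>{0..r \<theta>}. ennreal t \<partial>lborel) = ennreal ((r \<theta>)\<^sup>2/2 - 0\<^sup>2/2)"
    by (rule nn_integral_FTC_Icc) (auto intro!: derivative_eq_intros simp: less_imp_le[OF pos])
  finally show ?thesis by (simp add: f_def)
qed

lemma area_polar: "emeasure lborel R = (\<integral>\<^sup>+\<theta>. indicator {-(pi/2)<..<3*pi/2} \<theta> * ennreal (f \<theta>) \<partial>lborel)"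
proof -
  have "emeasure lborel R = (\<integral>\<^sup>+x. indicator R x \<partial>lborel)" by simp
  also have "\<dots> = (\<integral>\<^sup>+\<theta>. indicator {-(pi/2)<..<3*pi/2} \<theta> * Kp (\<lambda>z. indicator R (p0 + z)) \<theta> \<partial>lborel)"
    by (rule polar_at) simp
  also have "\<dots> = (\<integral>\<^sup>+\<theta>. indicator {-(pi/2)<..<3*pi/2} \<theta> * ennreal (f \<theta>) \<partial>lborel)"
  proof (intro nn_integral_cong)
    fix \<theta>
    have "Kp (\<lambda>z. indicator R (p0 + z)) \<theta> = ennreal (f \<theta>) * 1"
      by (rule Kp_ray) (simp add: indicator_def mem_R)
    then show "indicator {-(pi/2)<..<3*pi/2} \<theta> * Kp (\<lambda>z. indicator R (p0 + z)) \<theta> =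
       indicator {-(pi/2)<..<3*pi/2} \<theta> * ennreal (f \<theta>)" by simp
  qed
  finally show ?thesis .
qed

end

locale setting2 = setting +
  assumes area: "emeasure lborel R = 1"
begin

abbreviation "M \<equiv> uniform_measure lborel R"

definition Lset :: "real \<times> real \<Rightarrow> (real \<times> real) set" where
  "Lset a = {b. cr (a - p0) (b - p0) > 0}"

definition H :: "real \<Rightarrow> real" where "H \<theta> = integral {\<theta>..\<theta>+pi} f"

lemma sets_M[measurable_cong]: "sets M = sets borel" by simp

lemma space_M[simp]: "space M = UNIV" by simp

lemma M_prob: "prob_space M"
  by (rule prob_space_uniform_measure) (simp_all add: area)

lemma emeasure_M: "B \<in> sets borel \<Longrightarrow> emeasure M B = emeasure lborel (R \<inter> B)"
  using emeasure_uniform_measure[of R lborel B] area by (simp add: divide_ennreal_def)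

lemma nn_M: "g \<in> borel_measurable borel \<Longrightarrow> (\<integral>\<^sup>+x. g x \<partial>M) = (\<integral>\<^sup>+x. indicator R x * g x \<partial>lborel)"
  using nn_integral_uniform_measure[of g lborel R] area by (simp add: mult.commute divide_ennreal_def)

lemma Lset_sets[measurable]: "Lset a \<in> sets borel"
proof -
  have "Lset a = {b \<in> space borel. 0 < cr (a - p0) (b - p0)}" unfolding Lset_def by simp
  also have "\<dots> \<in> sets borel" by measurable
  finally show ?thesis .
qed

lemma total_nn: "(\<integral>\<^sup>+\<theta>. indicator {a<..<a+2*pi} \<theta> * ennreal (f \<theta>) \<partial>lborel) = 1"
proof -
  have "1 = emeasure lborel R" using area by simp
  also have "\<dots> = (\<integral>\<^sup>+\<theta>. indicator {-(pi/2)<..<-(pi/2)+2*pi} \<theta> * ennreal (f \<theta>) \<partial>lborel)"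
    unfolding area_polar by simp
  also have "\<dots> = (\<integral>\<^sup>+\<theta>. indicator {a<..<a+2*pi} \<theta> * ennreal (f \<theta>) \<partial>lborel)"
    by (rule shift_period_gen) (simp_all add: f_periodic)
  finally show ?thesis by simp
qed

lemma total: "integral {a..a+2*pi} f = 1"
proof -
  have "ennreal (integral {a..a+2*pi} f) = 1"
    using total_nn[of a] nn_Ioo_integral[of a "a+2*pi" f] f_cont f_nonneg by simp
  moreover have "integral {a..a+2*pi} f \<ge> 0"
    by (intro integral_nonneg integrable_continuous_interval f_cont f_nonneg)
  ultimately show ?thesis by simp
qed

lemma half:
  assumes s: "s > 0"
  shows "emeasure M (Lset (p0 + (s * cos \<alpha>, s * sin \<alpha>))) = ennreal (H \<alpha>)"
proof -
  let ?L = "Lset (p0 + (s * cos \<alpha>, s * sin \<alpha>))"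
  let ?h = "\<lambda>\<theta>. ennreal (f \<theta>) * indicator {\<theta>. sin (\<theta> - \<alpha>) > 0} \<theta>"
  have hm[measurable]: "?h \<in> borel_measurable borel"
  proof -
    have "{\<theta>::real. sin (\<theta> - \<alpha>) > 0} = {\<theta> \<in> space borel. 0 < sin (\<theta> - \<alpha>)}" by simp
    also have "\<dots> \<in> sets borel" by measurable
    finally show ?thesis by measurable
  qed
  have "emeasure M ?L = emeasure lborel (R \<inter> ?L)" by (rule emeasure_M) simp
  also have "\<dots> = (\<integral>\<^sup>+x. indicator (R \<inter> ?L) x \<partial>lborel)" by simp
  also have "\<dots> = (\<integral>\<^sup>+\<theta>. indicator {-(pi/2)<..<3*pi/2} \<theta> * Kp (\<lambda>z. indicator (R \<inter> ?L) (p0 + z)) \<theta> \<partial>lborel)"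
    by (rule polar_at) simp
  also have "\<dots> = (\<integral>\<^sup>+\<theta>. indicator {-(pi/2)<..<-(pi/2)+2*pi} \<theta> * ?h \<theta> \<partial>lborel)"
  proof (intro nn_integral_cong)
    fix \<theta>
    have "Kp (\<lambda>z. indicator (R \<inter> ?L) (p0 + z)) \<theta> = ennreal (f \<theta>) * indicator {\<theta>. sin (\<theta> - \<alpha>) > 0} \<theta>"
    proof (rule Kp_ray)
      fix t :: real assume t: "t > 0"
      have "p0 + (t * cos \<theta>, t * sin \<theta>) \<in> ?L \<longleftrightarrow> sin (\<theta> - \<alpha>) > 0"
      proof -
        have st: "s * t > 0" using s t by simp
        have "0 < s * t * sin (\<theta> - \<alpha>) \<longleftrightarrow> 0 < sin (\<theta> - \<alpha>)"
          using st by (smt (verit) zero_less_mult_iff)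
        then show ?thesis unfolding Lset_def by (simp add: cr_polar)
      qed
      then show "indicator (R \<inter> ?L) (p0 + (t * cos \<theta>, t * sin \<theta>)) =
          indicator {..r \<theta>} t * (indicator {\<theta>. sin (\<theta> - \<alpha>) > 0} \<theta> :: ennreal)"
        using mem_R[OF t] by (simp add: indicator_def)
    qed
    then show "indicator {-(pi/2)<..<3*pi/2} \<theta> * Kp (\<lambda>z. indicator (R \<inter> ?L) (p0 + z)) \<theta> =
       indicator {-(pi/2)<..<-(pi/2)+2*pi} \<theta> * ?h \<theta>" by simp
  qed
  also have "\<dots> = (\<integral>\<^sup>+\<theta>. indicator {\<alpha><..<\<alpha>+2*pi} \<theta> * ?h \<theta> \<partial>lborel)"
  proof (rule shift_period_gen)
    fix \<theta> :: real
    have "sin (\<theta> + 2*pi - \<alpha>) = sin ((\<theta> - \<alpha>) + 2*pi)" by (simp add: algebra_simps)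
    then show "?h (\<theta> + 2*pi) = ?h \<theta>" by (simp add: f_periodic indicator_def)
  qed simp
  also have "\<dots> = (\<integral>\<^sup>+\<theta>. indicator {\<alpha><..<\<alpha>+pi} \<theta> * ennreal (f \<theta>) \<partial>lborel)"
  proof (intro nn_integral_cong_AE eventually_mono[OF AE_lborel_singleton[of "\<alpha>+pi"]] impI)
    fix \<theta> assume ne: "\<theta> \<noteq> \<alpha> + pi"
    show "indicator {\<alpha><..<\<alpha>+2*pi} \<theta> * ?h \<theta> = indicator {\<alpha><..<\<alpha>+pi} \<theta> * ennreal (f \<theta>)"
    proof (cases "\<theta> \<in> {\<alpha><..<\<alpha>+pi}")
      case True
      then have "sin (\<theta> - \<alpha>) > 0" by (intro sin_gt_zero) auto
      then show ?thesis using True by (simp add: indicator_def)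
    next
      case False
      show ?thesis
      proof (cases "\<theta> \<in> {\<alpha><..<\<alpha>+2*pi}")
        case True
        with False ne have "sin (\<theta> - \<alpha>) < 0" by (intro sin_lt_zero) auto
        then show ?thesis using True False by (simp add: indicator_def)
      qed (use False in \<open>auto simp: indicator_def\<close>)
    qed
  qed
  also have "\<dots> = ennreal (H \<alpha>)"
    unfolding H_def by (rule nn_Ioo_integral) (simp_all add: f_cont f_nonneg)
  finally show ?thesis .
qed

end

lemma translate_Ioo:
  fixes h :: "real \<Rightarrow> ennreal"
  assumes [measurable]: "h \<in> borel_measurable borel" and per: "\<And>\<theta>. h (\<theta> + c) = h \<theta>"
  shows "(\<integral>\<^sup>+\<theta>. indicator {a<..<b} \<theta> * h \<theta> \<partial>lborel) = (\<integral>\<^sup>+\<theta>. indicator {a+c<..<b+c} \<theta> * h \<theta> \<partial>lborel)"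
proof -
  have ind: "\<And>x. indicator {a+c<..<b+c} (x + c) = (indicator {a<..<b} x :: ennreal)"
    by (auto simp: indicator_def)
  show ?thesis
    using nn_integral_real_affine[of "\<lambda>\<theta>. indicator {a+c<..<b+c} \<theta> * h \<theta>" 1 c]
    by (simp add: ind add.commute per)
qed

context setting2
begin

lemma H_nonneg: "H \<theta> \<ge> 0"
  unfolding H_def by (intro integral_nonneg integrable_continuous_interval f_cont f_nonneg)

lemma ennreal_H: "ennreal (H \<theta>) = (\<integral>\<^sup>+x. indicator {\<theta><..<\<theta>+pi} x * ennreal (f x) \<partial>lborel)"
  unfolding H_def by (rule nn_Ioo_integral[symmetric]) (simp_all add: f_cont f_nonneg)

lemma H_periodic: "H (\<theta> + 2*pi) = H \<theta>"
proof -
  have "ennreal (H (\<theta> + 2*pi)) = ennreal (H \<theta>)"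
    unfolding ennreal_H using translate_Ioo[of "\<lambda>x. ennreal (f x)" "2*pi" \<theta> "\<theta>+pi"]
    by (simp add: f_periodic add_ac)
  then show ?thesis using H_nonneg by simp
qed

lemma H_compl: "H (\<theta> + pi) = 1 - H \<theta>"
proof -
  have "integral {\<theta>..\<theta>+pi} f + integral {\<theta>+pi..\<theta>+pi+pi} f = integral {\<theta>..\<theta>+pi+pi} f"
    by (rule Henstock_Kurzweil_Integration.integral_combine) (auto intro!: integrable_continuous_interval f_cont)
  then show ?thesis using total[of \<theta>] unfolding H_def by (simp add: add_ac)
qed

definition P :: "real \<Rightarrow> real" where "P u = integral {-4..u} f"

lemma P_deriv: "u > -4 \<Longrightarrow> (P has_real_derivative f u) (at u)"
proof -
  assume u: "u > -4"
  have 1: "(P has_real_derivative f u) (at u within {-4..u+1})"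
    unfolding P_def by (rule integral_has_real_derivative[OF f_cont]) (use u in simp)
  have "u \<in> interior {-4..u+1}" using u by (simp add: interior_atLeastAtMost_real)
  then have "at u within {-4..u+1} = at u" by (rule at_within_interior)
  then show ?thesis using 1 by simp
qed

lemma H_P: "\<theta> \<ge> -4 \<Longrightarrow> H \<theta> = P (\<theta> + pi) - P \<theta>"
proof -
  assume "\<theta> \<ge> -4"
  then have "integral {-4..\<theta>} f + integral {\<theta>..\<theta>+pi} f = integral {-4..\<theta>+pi} f"
    by (intro Henstock_Kurzweil_Integration.integral_combine) (auto intro!: integrable_continuous_interval f_cont)
  then show ?thesis unfolding H_def P_def by simp
qed

lemma H_deriv: "\<theta> > -4 \<Longrightarrow> (H has_real_derivative (f (\<theta> + pi) - f \<theta>)) (at \<theta>)"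
proof -
  assume th: "\<theta> > -4"
  have d1: "((\<lambda>x. P (x + pi)) has_real_derivative f (\<theta> + pi) * 1) (at \<theta>)"
  proof (rule DERIV_chain2[where g="\<lambda>x. x + pi"])
    show "(P has_real_derivative f (\<theta> + pi)) (at (\<theta> + pi))" using th pi_gt_zero by (intro P_deriv) linarith
    show "((\<lambda>x. x + pi) has_real_derivative 1) (at \<theta>)" by (auto intro!: derivative_eq_intros)
  qed
  have "((\<lambda>x. P (x + pi) - P x) has_real_derivative (f (\<theta> + pi) * 1 - f \<theta>)) (at \<theta>)"
    by (rule DERIV_diff[OF d1 P_deriv[OF th]])
  then have "((\<lambda>x. P (x + pi) - P x) has_real_derivative (f (\<theta> + pi) - f \<theta>)) (at \<theta>)" by simp
  moreover have "\<forall>\<^sub>F x in nhds \<theta>. H x = P (x + pi) - P x"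
  proof -
    have "eventually (\<lambda>x. x \<in> {-4<..}) (nhds \<theta>)" using th by (intro eventually_nhds_in_open) auto
    then show ?thesis by eventually_elim (simp add: H_P)
  qed
  ultimately show ?thesis by (subst DERIV_cong_ev[OF refl _ refl]) auto
qed

lemma H_cont: "a > -4 \<Longrightarrow> continuous_on {a..b} H"
  by (intro continuous_at_imp_continuous_on ballI DERIV_isCont[OF H_deriv]) auto

definition Iint where "Iint = (\<integral>\<^sup>+a. (emeasure M (Lset a))\<^sup>2 \<partial>M)"

lemma Lset_meas[measurable]: "(\<lambda>a. emeasure M (Lset a)) \<in> borel_measurable borel"
proof -
  interpret prob_space M by (rule M_prob)
  let ?Q = "{x :: (real\<times>real)\<times>(real\<times>real). 0 < cr (fst x - p0) (snd x - p0)}"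
  have Q: "?Q \<in> sets (borel \<Otimes>\<^sub>M M)"
  proof -
    have "?Q = {x \<in> space (borel \<Otimes>\<^sub>M M). 0 < cr (fst x - p0) (snd x - p0)}" by (simp add: space_pair_measure)
    also have "\<dots> \<in> sets (borel \<Otimes>\<^sub>M M)" by measurable
    finally show ?thesis .
  qed
  have 1: "(\<lambda>a. emeasure M (Pair a -` ?Q)) \<in> borel_measurable borel" by (rule measurable_emeasure_Pair[OF Q])
  have 2: "Pair a -` ?Q = Lset a" for a by (auto simp: Lset_def)
  have eq: "(\<lambda>a. emeasure M (Pair a -` ?Q)) = (\<lambda>a. emeasure M (Lset a))" by (rule ext) (simp only: 2)
  show ?thesis using 1 by (simp only: eq)
qed

lemma I_polar: "Iint = (\<integral>\<^sup>+\<theta>. indicator {-(pi/2)<..<3*pi/2} \<theta> * ennreal (f \<theta> * (H \<theta>)\<^sup>2) \<partial>lborel)"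
proof -
  have "Iint = (\<integral>\<^sup>+x. indicator R x * (emeasure M (Lset x))\<^sup>2 \<partial>lborel)"
    unfolding Iint_def by (rule nn_M) measurable
  also have "\<dots> = (\<integral>\<^sup>+\<theta>. indicator {-(pi/2)<..<3*pi/2} \<theta> * Kp (\<lambda>z. indicator R (p0 + z) * (emeasure M (Lset (p0 + z)))\<^sup>2) \<theta> \<partial>lborel)"
    by (rule polar_at) measurable
  also have "\<dots> = (\<integral>\<^sup>+\<theta>. indicator {-(pi/2)<..<3*pi/2} \<theta> * ennreal (f \<theta> * (H \<theta>)\<^sup>2) \<partial>lborel)"
  proof (intro nn_integral_cong)
    fix \<theta>
    have "Kp (\<lambda>z. indicator R (p0 + z) * (emeasure M (Lset (p0 + z)))\<^sup>2) \<theta> = ennreal (f \<theta>) * (ennreal (H \<theta>))\<^sup>2"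
    proof (rule Kp_ray)
      fix t :: real assume t: "t > 0"
      show "indicator R (p0 + (t * cos \<theta>, t * sin \<theta>)) * (emeasure M (Lset (p0 + (t * cos \<theta>, t * sin \<theta>))))\<^sup>2 =
          indicator {..r \<theta>} t * (ennreal (H \<theta>))\<^sup>2"
        using mem_R[OF t] half[OF t] by (simp add: indicator_def)
    qed
    also have "\<dots> = ennreal (f \<theta> * (H \<theta>)\<^sup>2)"
      using f_nonneg H_nonneg by (simp add: ennreal_mult ennreal_power)
    finally show "indicator {-(pi/2)<..<3*pi/2} \<theta> * Kp (\<lambda>z. indicator R (p0 + z) * (emeasure M (Lset (p0 + z)))\<^sup>2) \<theta> =
      indicator {-(pi/2)<..<3*pi/2} \<theta> * ennreal (f \<theta> * (H \<theta>)\<^sup>2)" by simp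
  qed
  finally show ?thesis .
qed

lemma H_meas[measurable]: "H \<in> borel_measurable borel"
proof -
  have "continuous_on UNIV H"
  proof (intro continuous_at_imp_continuous_on ballI)
    fix x :: real
    obtain k :: int where k: "x + 2*pi*real_of_int k > -1"
    proof -
      obtain n :: nat where "real n > \<bar>x\<bar>" using reals_Archimedean2 by blast
      moreover have "2*pi*real n \<ge> real n"
      proof -
        have "1 \<le> 2*pi" using pi_gt3 by simp
        from mult_right_mono[OF this, of "real n"] show ?thesis by simp
      qed
      ultimately show ?thesis using that[of "int n"] by auto
    qed
    have c: "isCont H (x + 2*pi*real_of_int k)" using k by (intro DERIV_isCont[OF H_deriv]) simp
    have "isCont (\<lambda>y. H (y + 2*pi*real_of_int k)) x"
      using isCont_o2[where f="\<lambda>y. y + 2*pi*real_of_int k" and g=H and a=x] c by (auto intro!: continuous_intros)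
    moreover have "(\<lambda>y. H (y + 2*pi*real_of_int k)) = H"
      using per_int[where h=H, OF H_periodic] by auto
    ultimately show "isCont H x" by simp
  qed
  then show ?thesis by (rule borel_measurable_continuous_onI)
qed

lemma I_real: "a > -4 \<Longrightarrow> Iint = ennreal (integral {a..a+2*pi} (\<lambda>\<theta>. f \<theta> * (H \<theta>)\<^sup>2))"
proof -
  assume a: "a > -4"
  have "Iint = (\<integral>\<^sup>+\<theta>. indicator {-(pi/2)<..<-(pi/2)+2*pi} \<theta> * ennreal (f \<theta> * (H \<theta>)\<^sup>2) \<partial>lborel)"
    unfolding I_polar by simp
  also have "\<dots> = (\<integral>\<^sup>+\<theta>. indicator {a<..<a+2*pi} \<theta> * ennreal (f \<theta> * (H \<theta>)\<^sup>2) \<partial>lborel)"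
    by (rule shift_period_gen) (simp_all add: f_periodic H_periodic)
  also have "\<dots> = ennreal (integral {a..a+2*pi} (\<lambda>\<theta>. f \<theta> * (H \<theta>)\<^sup>2))"
    using a by (intro nn_Ioo_integral continuous_intros f_cont H_cont) (auto intro!: mult_nonneg_nonneg f_nonneg)
  finally show ?thesis .
qed

end

lemma hull_iff:
  "p0 \<in> convex hull {a, b, c} \<longleftrightarrow>
   (\<exists>u v w. 0 \<le> u \<and> 0 \<le> v \<and> 0 \<le> w \<and> u + v + w = 1 \<and>
      u *\<^sub>R (a - p0) + v *\<^sub>R (b - p0) + w *\<^sub>R (c - p0) = (0 :: real \<times> real))"
proof -
  have key: "(u *\<^sub>R (a - p0) + v *\<^sub>R (b - p0) + w *\<^sub>R (c - p0) = 0) = (p0 = u *\<^sub>R a + v *\<^sub>R b + w *\<^sub>R c)"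
    if uvw: "u + v + w = 1" for u v w :: real
  proof -
    have "u *\<^sub>R (a - p0) + v *\<^sub>R (b - p0) + w *\<^sub>R (c - p0) = (u *\<^sub>R a + v *\<^sub>R b + w *\<^sub>R c) - (u + v + w) *\<^sub>R p0"
      by (simp add: algebra_simps)
    also have "\<dots> = (u *\<^sub>R a + v *\<^sub>R b + w *\<^sub>R c) - p0" using uvw by simp
    finally have e: "u *\<^sub>R (a - p0) + v *\<^sub>R (b - p0) + w *\<^sub>R (c - p0) = (u *\<^sub>R a + v *\<^sub>R b + w *\<^sub>R c) - p0" .
    show "(u *\<^sub>R (a - p0) + v *\<^sub>R (b - p0) + w *\<^sub>R (c - p0) = 0) = (p0 = u *\<^sub>R a + v *\<^sub>R b + w *\<^sub>R c)"
      unfolding e by (auto simp: eq_iff_diff_eq_0[symmetric])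
  qed
  show ?thesis
  proof
    assume "p0 \<in> convex hull {a, b, c}"
    then obtain u v w where h: "0 \<le> u" "0 \<le> v" "0 \<le> w" "u + v + w = 1" "p0 = u *\<^sub>R a + v *\<^sub>R b + w *\<^sub>R c"
      unfolding convex_hull_3 by blast
    then show "\<exists>u v w. 0 \<le> u \<and> 0 \<le> v \<and> 0 \<le> w \<and> u + v + w = 1 \<and>
      u *\<^sub>R (a - p0) + v *\<^sub>R (b - p0) + w *\<^sub>R (c - p0) = 0" using key[OF h(4)] by blast
  next
    assume "\<exists>u v w. 0 \<le> u \<and> 0 \<le> v \<and> 0 \<le> w \<and> u + v + w = 1 \<and>
      u *\<^sub>R (a - p0) + v *\<^sub>R (b - p0) + w *\<^sub>R (c - p0) = 0"
    then obtain u v w where h: "0 \<le> u" "0 \<le> v" "0 \<le> w" "u + v + w = 1"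
       "u *\<^sub>R (a - p0) + v *\<^sub>R (b - p0) + w *\<^sub>R (c - p0) = 0" by blast
    then have "p0 = u *\<^sub>R a + v *\<^sub>R b + w *\<^sub>R c" using key[OF h(4)] by blast
    then show "p0 \<in> convex hull {a, b, c}" unfolding convex_hull_3 using h by blast
  qed
qed

lemma geo_out:
  fixes x y z :: "real \<times> real"
  assumes "cr x y > 0" "cr x z > 0"
  shows "\<not> (\<exists>u v w. 0 \<le> u \<and> 0 \<le> v \<and> 0 \<le> w \<and> u + v + w = 1 \<and> u *\<^sub>R x + v *\<^sub>R y + w *\<^sub>R z = 0)"
proof
  assume "\<exists>u v w. 0 \<le> u \<and> 0 \<le> v \<and> 0 \<le> w \<and> u + v + w = 1 \<and> u *\<^sub>R x + v *\<^sub>R y + w *\<^sub>R z = 0"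
  then obtain u v w where uvw: "0 \<le> u" "0 \<le> v" "0 \<le> w" "u + v + w = 1" and eq: "u *\<^sub>R x + v *\<^sub>R y + w *\<^sub>R z = 0"
    by blast
  obtain x1 x2 y1 y2 z1 z2 where xyz: "x = (x1, x2)" "y = (y1, y2)" "z = (z1, z2)" by (cases x, cases y, cases z) auto
  from eq have e1: "u * x1 + v * y1 + w * z1 = 0" and e2: "u * x2 + v * y2 + w * z2 = 0"
    by (auto simp: xyz zero_prod_def)
  have key: "v * cr x y + w * cr x z = x1 * (u * x2 + v * y2 + w * z2) - x2 * (u * x1 + v * y1 + w * z1)"
    by (simp add: cr_def xyz algebra_simps)
  then have "v * cr x y + w * cr x z = 0" using e1 e2 by simp
  moreover have "v * cr x y \<ge> 0" "w * cr x z \<ge> 0" using uvw assms by simp_all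
  ultimately have "v * cr x y = 0" "w * cr x z = 0" by linarith+
  then have "v = 0" "w = 0" using assms by simp_all
  then have "u = 1" using uvw by simp
  then have "x = 0" using eq \<open>v = 0\<close> \<open>w = 0\<close> by simp
  then show False using assms by (simp add: cr_def)
qed

lemma geo_in:
  fixes x y z :: "real \<times> real"
  assumes nz: "cr x y \<noteq> 0" "cr y z \<noteq> 0" "cr x z \<noteq> 0"
    and na: "\<not> (cr x y > 0 \<and> cr x z > 0)"
    and nb: "\<not> (cr y z > 0 \<and> cr y x > 0)"
    and nc: "\<not> (cr z x > 0 \<and> cr z y > 0)"
  shows "\<exists>u v w. 0 \<le> u \<and> 0 \<le> v \<and> 0 \<le> w \<and> u + v + w = 1 \<and> u *\<^sub>R x + v *\<^sub>R y + w *\<^sub>R z = 0"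
proof -
  define s1 s2 s3 where "s1 = cr y z" "s2 = cr z x" "s3 = cr x y"
  have anti: "cr y x = - s3" "cr x z = - s2" "cr z y = - s1" unfolding s1_s2_s3_def cr_def by simp_all
  have ident: "s1 *\<^sub>R x + s2 *\<^sub>R y + s3 *\<^sub>R z = 0"
    unfolding s1_s2_s3_def cr_def by (cases x, cases y, cases z) (simp add: algebra_simps zero_prod_def)
  have signs: "(s1 > 0 \<and> s2 > 0 \<and> s3 > 0) \<or> (s1 < 0 \<and> s2 < 0 \<and> s3 < 0)"
  proof -
    have "s1 \<noteq> 0" "s2 \<noteq> 0" "s3 \<noteq> 0" using nz anti unfolding s1_s2_s3_def by auto
    moreover have "\<not> (s3 > 0 \<and> - s2 > 0)" "\<not> (s1 > 0 \<and> - s3 > 0)" "\<not> (s2 > 0 \<and> - s1 > 0)"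
      using na nb nc anti unfolding s1_s2_s3_def by auto
    ultimately show ?thesis by (smt (verit))
  qed
  define S where "S = s1 + s2 + s3"
  have S: "S \<noteq> 0" using signs unfolding S_def by linarith
  show ?thesis
  proof (intro exI conjI)
    show "0 \<le> s1 / S" "0 \<le> s2 / S" "0 \<le> s3 / S" using signs unfolding S_def
      by (auto simp: divide_nonneg_pos divide_nonpos_neg intro: divide_nonpos_neg)
    show "s1 / S + s2 / S + s3 / S = 1" using S unfolding S_def by (simp add: add_divide_distrib[symmetric])
    have "(s1 / S) *\<^sub>R x + (s2 / S) *\<^sub>R y + (s3 / S) *\<^sub>R z = (1 / S) *\<^sub>R (s1 *\<^sub>R x + s2 *\<^sub>R y + s3 *\<^sub>R z)"
      by (simp add: scaleR_add_right)
    then show "(s1 / S) *\<^sub>R x + (s2 / S) *\<^sub>R y + (s3 / S) *\<^sub>R z = 0" using ident by simp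
  qed
qed

lemma T_borel:
  "{t :: (real\<times>real)\<times>(real\<times>real)\<times>(real\<times>real). p0 \<in> convex hull {fst t, fst (snd t), snd (snd t)}} \<in> sets borel"
proof -
  define g where "g = (\<lambda>z :: ((real\<times>real)\<times>(real\<times>real)\<times>(real\<times>real)) \<times> (real\<times>real\<times>real).
     fst (snd z) *\<^sub>R (fst (fst z) - p0) + fst (snd (snd z)) *\<^sub>R (fst (snd (fst z)) - p0) +
     snd (snd (snd z)) *\<^sub>R (snd (snd (fst z)) - p0))"
  define K where "K = (\<lambda>n::nat. {z. norm (fst z) \<le> real n \<and> 0 \<le> fst (snd z) \<and> 0 \<le> fst (snd (snd z)) \<and>
      0 \<le> snd (snd (snd z)) \<and> fst (snd z) + fst (snd (snd z)) + snd (snd (snd z)) = 1 \<and> g z = 0})"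
  have gc: "continuous_on UNIV g" unfolding g_def by (intro continuous_intros)
  have cK: "compact (K n)" for n
  proof -
    have "closed (K n)" unfolding K_def
      by (intro closed_Collect_conj closed_Collect_le closed_Collect_eq continuous_intros gc)
    moreover have "K n \<subseteq> cball 0 (real n) \<times> cbox (0,0,0) (1,1,1)"
      unfolding K_def by (auto simp: cbox_Pair_iff)
    then have "bounded (K n)" by (rule bounded_subset[OF bounded_Times[OF bounded_cball bounded_cbox]])
    ultimately show ?thesis by (simp add: compact_eq_bounded_closed)
  qed
  have eq: "{t. p0 \<in> convex hull {fst t, fst (snd t), snd (snd t)}} = (\<Union>n. fst ` K n)"
  proof (intro set_eqI iffI)
    fix t :: "(real\<times>real)\<times>(real\<times>real)\<times>(real\<times>real)"
    assume "t \<in> {t. p0 \<in> convex hull {fst t, fst (snd t), snd (snd t)}}"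
    then obtain u v w where h: "0 \<le> u" "0 \<le> v" "0 \<le> w" "u + v + w = 1"
      "u *\<^sub>R (fst t - p0) + v *\<^sub>R (fst (snd t) - p0) + w *\<^sub>R (snd (snd t) - p0) = 0"
      unfolding hull_iff by blast
    obtain n :: nat where n: "norm t \<le> real n" using real_arch_simple by blast
    have "(t, (u, v, w)) \<in> K n" unfolding K_def g_def using h n by simp
    then show "t \<in> (\<Union>n. fst ` K n)" by (intro UN_I[of n] image_eqI[of t fst "(t, (u, v, w))"]) auto
  next
    fix t assume "t \<in> (\<Union>n. fst ` K n)"
    then obtain n z where "z \<in> K n" "t = fst z" by auto
    then show "t \<in> {t. p0 \<in> convex hull {fst t, fst (snd t), snd (snd t)}}"
      unfolding K_def g_def hull_iff by (cases z) auto
  qed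
  have "fst ` K n \<in> sets borel" for n
    using compact_continuous_image[OF continuous_on_fst[OF continuous_on_id] cK[of n]]
    by (simp add: borel_compact)
  then show ?thesis unfolding eq by (intro sets.countable_UN) auto
qed

context setting2
begin

abbreviation "M3 \<equiv> M \<Otimes>\<^sub>M M \<Otimes>\<^sub>M M"

lemma sets_M3: "sets M3 = sets borel"
proof -
  have "sets M3 = sets (borel \<Otimes>\<^sub>M (borel \<Otimes>\<^sub>M borel) :: ((real\<times>real)\<times>(real\<times>real)\<times>(real\<times>real)) measure)"
    by (intro sets_pair_measure_cong) simp_all
  also have "(borel \<Otimes>\<^sub>M borel :: ((real\<times>real)\<times>(real\<times>real)) measure) = borel" by (rule borel_prod)
  also have "(borel \<Otimes>\<^sub>M borel :: ((real\<times>real)\<times>(real\<times>real)\<times>(real\<times>real)) measure) = borel" by (rule borel_prod)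
  finally show ?thesis .
qed

lemma M_negl: "B \<in> sets borel \<Longrightarrow> negligible B \<Longrightarrow> emeasure M B = 0"
proof -
  assume B: "B \<in> sets borel" "negligible B"
  then have "B \<in> null_sets lborel"
    using null_sets_completion_iff[of B lborel] by (simp add: negligible_iff_null_sets)
  then have "emeasure lborel B = 0" by auto
  moreover have "emeasure lborel (R \<inter> B) \<le> emeasure lborel B" using B by (intro emeasure_mono) auto
  ultimately show ?thesis using emeasure_M[OF B(1)] by simp
qed

definition Z :: "real \<times> real \<Rightarrow> (real \<times> real) set" where "Z a = {b. cr (a - p0) (b - p0) = 0}"

lemma Z_sets[measurable]: "Z a \<in> sets borel"
proof -
  have "Z a = {b \<in> space borel. cr (a - p0) (b - p0) = 0}" unfolding Z_def by simp
  also have "\<dots> \<in> sets borel" by measurable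
  finally show ?thesis .
qed

lemma Z_null: "a \<noteq> p0 \<Longrightarrow> emeasure M (Z a) = 0"
proof -
  assume a: "a \<noteq> p0"
  define n where "n = (- snd (a - p0), fst (a - p0))"
  have n0: "n \<noteq> 0" using a unfolding n_def by (cases a, cases p0) (auto simp: zero_prod_def)
  have "Z a = {b. n \<bullet> b = n \<bullet> p0}" unfolding Z_def n_def
    by (auto simp: cr_def inner_prod_def algebra_simps)
  then have "negligible (Z a)" using negligible_hyperplane[of n "n \<bullet> p0"] n0 by simp
  then show ?thesis by (intro M_negl) simp_all
qed

lemma AE_ne: "AE a in M. a \<noteq> p0"
proof (rule AE_I'[of "{p0}"])
  have "emeasure M {p0} = 0" by (intro M_negl) simp_all
  then show "{p0} \<in> null_sets M" by auto
qed auto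

lemma M_sf: "sigma_finite_measure M" by (rule prob_space_imp_sigma_finite[OF M_prob])
lemma MM_sf: "sigma_finite_measure (M \<Otimes>\<^sub>M M)" by (intro prob_space_imp_sigma_finite prob_space_pair M_prob)
lemma MM_psf: "pair_sigma_finite M M" by (simp add: pair_sigma_finite_def M_sf)

definition LL :: "((real \<times> real) \<times> (real \<times> real)) set" where
  "LL = {p. 0 < cr (fst p - p0) (snd p - p0)}"

lemma LL_sets[measurable]: "LL \<in> sets (M \<Otimes>\<^sub>M M)"
proof -
  have "LL = {p \<in> space (M \<Otimes>\<^sub>M M). 0 < cr (fst p - p0) (snd p - p0)}" unfolding LL_def by (simp add: space_pair_measure)
  also have "\<dots> \<in> sets (M \<Otimes>\<^sub>M M)" by measurable
  finally show ?thesis .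
qed

lemma ind_LL: "indicator (Lset b) a = (indicator LL (b, a) :: ennreal)"
  by (simp add: indicator_def Lset_def LL_def)

lemma E1: "emeasure M3 {(a,b,c). cr (a-p0) (b-p0) > 0 \<and> cr (a-p0) (c-p0) > 0} = Iint"
proof -
  let ?E = "{(a,b,c). cr (a-p0) (b-p0) > 0 \<and> cr (a-p0) (c-p0) > 0}"
  have Es: "?E \<in> sets M3"
  proof -
    have "?E = {t \<in> space M3. 0 < cr (fst t - p0) (fst (snd t) - p0) \<and> 0 < cr (fst t - p0) (snd (snd t) - p0)}"
      by (auto simp: space_pair_measure)
    also have "\<dots> \<in> sets M3" by measurable
    finally show ?thesis .
  qed
  have "emeasure M3 ?E = (\<integral>\<^sup>+a. emeasure (M \<Otimes>\<^sub>M M) (Pair a -` ?E) \<partial>M)"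
    by (rule sigma_finite_measure.emeasure_pair_measure_alt[OF MM_sf Es])
  also have "\<dots> = (\<integral>\<^sup>+a. (emeasure M (Lset a))\<^sup>2 \<partial>M)"
  proof (intro nn_integral_cong)
    fix a
    have "Pair a -` ?E = Lset a \<times> Lset a" by (auto simp: Lset_def)
    then show "emeasure (M \<Otimes>\<^sub>M M) (Pair a -` ?E) = (emeasure M (Lset a))\<^sup>2"
      using sigma_finite_measure.emeasure_pair_measure_Times[OF M_sf, of "Lset a" M "Lset a"]
      by (simp add: power2_eq_square)
  qed
  finally show ?thesis unfolding Iint_def .
qed

lemma E2: "emeasure M3 {(a,b,c). cr (b-p0) (c-p0) > 0 \<and> cr (b-p0) (a-p0) > 0} = Iint"
proof -
  let ?E = "{(a,b,c). cr (b-p0) (c-p0) > 0 \<and> cr (b-p0) (a-p0) > 0}"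
  have Es: "?E \<in> sets M3"
  proof -
    have "?E = {t \<in> space M3. 0 < cr (fst (snd t) - p0) (snd (snd t) - p0) \<and> 0 < cr (fst (snd t) - p0) (fst t - p0)}"
      by (auto simp: space_pair_measure)
    also have "\<dots> \<in> sets M3" by measurable
    finally show ?thesis .
  qed
  have "emeasure M3 ?E = (\<integral>\<^sup>+a. emeasure (M \<Otimes>\<^sub>M M) (Pair a -` ?E) \<partial>M)"
    by (rule sigma_finite_measure.emeasure_pair_measure_alt[OF MM_sf Es])
  also have "\<dots> = (\<integral>\<^sup>+a. \<integral>\<^sup>+b. indicator LL (b, a) * emeasure M (Lset b) \<partial>M \<partial>M)"
  proof (intro nn_integral_cong)
    fix a
    have s: "Pair a -` ?E \<in> sets (M \<Otimes>\<^sub>M M)"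
    proof -
      have "Pair a -` ?E = {t \<in> space (M \<Otimes>\<^sub>M M). 0 < cr (fst t - p0) (snd t - p0) \<and> 0 < cr (fst t - p0) (a - p0)}"
        by (auto simp: space_pair_measure)
      also have "\<dots> \<in> sets (M \<Otimes>\<^sub>M M)" by measurable
      finally show ?thesis .
    qed
    have "emeasure (M \<Otimes>\<^sub>M M) (Pair a -` ?E) = (\<integral>\<^sup>+b. emeasure M (Pair b -` (Pair a -` ?E)) \<partial>M)"
      by (rule sigma_finite_measure.emeasure_pair_measure_alt[OF M_sf s])
    also have "\<dots> = (\<integral>\<^sup>+b. indicator LL (b, a) * emeasure M (Lset b) \<partial>M)"
    proof (intro nn_integral_cong)
      fix b
      have "Pair b -` (Pair a -` ?E) = (if (b, a) \<in> LL then Lset b else {})"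
        by (auto simp: Lset_def LL_def)
      then show "emeasure M (Pair b -` (Pair a -` ?E)) = indicator LL (b, a) * emeasure M (Lset b)"
        by (simp add: indicator_def)
    qed
    finally show "emeasure (M \<Otimes>\<^sub>M M) (Pair a -` ?E) = (\<integral>\<^sup>+b. indicator LL (b, a) * emeasure M (Lset b) \<partial>M)" .
  qed
  also have "\<dots> = (\<integral>\<^sup>+b. \<integral>\<^sup>+a. indicator LL (b, a) * emeasure M (Lset b) \<partial>M \<partial>M)"
  proof (rule pair_sigma_finite.Fubini'[OF MM_psf, of "\<lambda>b a. indicator LL (b, a) * emeasure M (Lset b)"])
    show "(\<lambda>(b, a). indicator LL (b, a) * emeasure M (Lset b)) \<in> borel_measurable (M \<Otimes>\<^sub>M M)"
      by measurable
  qed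
  also have "\<dots> = (\<integral>\<^sup>+b. (emeasure M (Lset b))\<^sup>2 \<partial>M)"
  proof (intro nn_integral_cong)
    fix b
    have "(\<integral>\<^sup>+a. indicator LL (b, a) * emeasure M (Lset b) \<partial>M) = (\<integral>\<^sup>+a. indicator (Lset b) a \<partial>M) * emeasure M (Lset b)"
      by (subst nn_integral_multc[symmetric]) (auto simp: ind_LL)
    then show "(\<integral>\<^sup>+a. indicator LL (b, a) * emeasure M (Lset b) \<partial>M) = (emeasure M (Lset b))\<^sup>2"
      by (simp add: power2_eq_square)
  qed
  finally show ?thesis unfolding Iint_def .
qed

lemma E3: "emeasure M3 {(a,b,c). cr (c-p0) (a-p0) > 0 \<and> cr (c-p0) (b-p0) > 0} = Iint"
proof -
  let ?E = "{(a,b,c). cr (c-p0) (a-p0) > 0 \<and> cr (c-p0) (b-p0) > 0}"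
  have Es: "?E \<in> sets M3"
  proof -
    have "?E = {t \<in> space M3. 0 < cr (snd (snd t) - p0) (fst t - p0) \<and> 0 < cr (snd (snd t) - p0) (fst (snd t) - p0)}"
      by (auto simp: space_pair_measure)
    also have "\<dots> \<in> sets M3" by measurable
    finally show ?thesis .
  qed
  have "emeasure M3 ?E = (\<integral>\<^sup>+a. emeasure (M \<Otimes>\<^sub>M M) (Pair a -` ?E) \<partial>M)"
    by (rule sigma_finite_measure.emeasure_pair_measure_alt[OF MM_sf Es])
  also have "\<dots> = (\<integral>\<^sup>+a. \<integral>\<^sup>+c. indicator LL (c, a) * emeasure M (Lset c) \<partial>M \<partial>M)"
  proof (intro nn_integral_cong)
    fix a
    have s: "Pair a -` ?E \<in> sets (M \<Otimes>\<^sub>M M)"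
    proof -
      have "Pair a -` ?E = {t \<in> space (M \<Otimes>\<^sub>M M). 0 < cr (snd t - p0) (a - p0) \<and> 0 < cr (snd t - p0) (fst t - p0)}"
        by (auto simp: space_pair_measure)
      also have "\<dots> \<in> sets (M \<Otimes>\<^sub>M M)" by measurable
      finally show ?thesis .
    qed
    have "emeasure (M \<Otimes>\<^sub>M M) (Pair a -` ?E) = (\<integral>\<^sup>+c. emeasure M ((\<lambda>b. (b, c)) -` (Pair a -` ?E)) \<partial>M)"
      by (rule pair_sigma_finite.emeasure_pair_measure_alt2[OF MM_psf s])
    also have "\<dots> = (\<integral>\<^sup>+c. indicator LL (c, a) * emeasure M (Lset c) \<partial>M)"
    proof (intro nn_integral_cong)
      fix c
      have "(\<lambda>b. (b, c)) -` (Pair a -` ?E) = (if (c, a) \<in> LL then Lset c else {})"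
        by (auto simp: Lset_def LL_def)
      then show "emeasure M ((\<lambda>b. (b, c)) -` (Pair a -` ?E)) = indicator LL (c, a) * emeasure M (Lset c)"
        by (simp add: indicator_def)
    qed
    finally show "emeasure (M \<Otimes>\<^sub>M M) (Pair a -` ?E) = (\<integral>\<^sup>+c. indicator LL (c, a) * emeasure M (Lset c) \<partial>M)" .
  qed
  also have "\<dots> = (\<integral>\<^sup>+c. \<integral>\<^sup>+a. indicator LL (c, a) * emeasure M (Lset c) \<partial>M \<partial>M)"
  proof (rule pair_sigma_finite.Fubini'[OF MM_psf, of "\<lambda>c a. indicator LL (c, a) * emeasure M (Lset c)"])
    show "(\<lambda>(c, a). indicator LL (c, a) * emeasure M (Lset c)) \<in> borel_measurable (M \<Otimes>\<^sub>M M)"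
      by measurable
  qed
  also have "\<dots> = (\<integral>\<^sup>+c. (emeasure M (Lset c))\<^sup>2 \<partial>M)"
  proof (intro nn_integral_cong)
    fix c
    have "(\<integral>\<^sup>+a. indicator LL (c, a) * emeasure M (Lset c) \<partial>M) = (\<integral>\<^sup>+a. indicator (Lset c) a \<partial>M) * emeasure M (Lset c)"
      by (subst nn_integral_multc[symmetric]) (auto simp: ind_LL)
    then show "(\<integral>\<^sup>+a. indicator LL (c, a) * emeasure M (Lset c) \<partial>M) = (emeasure M (Lset c))\<^sup>2"
      by (simp add: power2_eq_square)
  qed
  finally show ?thesis unfolding Iint_def .
qed

declare emeasure_uniform_measure[simp del]

lemma N_aux: "(\<integral>\<^sup>+a. emeasure M (Z a) * k \<partial>M) = 0"
proof -
  have "(\<integral>\<^sup>+a. emeasure M (Z a) * k \<partial>M) = (\<integral>\<^sup>+a. 0 \<partial>M)"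
    by (intro nn_integral_cong_AE eventually_mono[OF AE_ne]) (simp add: Z_null)
  then show ?thesis by simp
qed

lemma N1: "emeasure M3 {(a,b,c). cr (a-p0) (b-p0) = 0} = 0"
proof -
  let ?E = "{(a,b,c). cr (a-p0) (b-p0) = 0}"
  have Es: "?E \<in> sets M3"
  proof -
    have "?E = {t \<in> space M3. cr (fst t - p0) (fst (snd t) - p0) = 0}" by (auto simp: space_pair_measure)
    also have "\<dots> \<in> sets M3" by measurable
    finally show ?thesis .
  qed
  have "emeasure M3 ?E = (\<integral>\<^sup>+a. emeasure (M \<Otimes>\<^sub>M M) (Pair a -` ?E) \<partial>M)"
    by (rule sigma_finite_measure.emeasure_pair_measure_alt[OF MM_sf Es])
  also have "\<dots> = (\<integral>\<^sup>+a. emeasure M (Z a) * emeasure M UNIV \<partial>M)"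
  proof (intro nn_integral_cong)
    fix a
    have eq: "Pair a -` ?E = Z a \<times> UNIV" by (auto simp: Z_def)
    show "emeasure (M \<Otimes>\<^sub>M M) (Pair a -` ?E) = emeasure M (Z a) * emeasure M UNIV"
      unfolding eq by (rule sigma_finite_measure.emeasure_pair_measure_Times[OF M_sf]) simp_all
  qed
  finally show ?thesis using N_aux by simp
qed

lemma N3: "emeasure M3 {(a,b,c). cr (a-p0) (c-p0) = 0} = 0"
proof -
  let ?E = "{(a,b,c). cr (a-p0) (c-p0) = 0}"
  have Es: "?E \<in> sets M3"
  proof -
    have "?E = {t \<in> space M3. cr (fst t - p0) (snd (snd t) - p0) = 0}" by (auto simp: space_pair_measure)
    also have "\<dots> \<in> sets M3" by measurable
    finally show ?thesis .
  qed
  have "emeasure M3 ?E = (\<integral>\<^sup>+a. emeasure (M \<Otimes>\<^sub>M M) (Pair a -` ?E) \<partial>M)"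
    by (rule sigma_finite_measure.emeasure_pair_measure_alt[OF MM_sf Es])
  also have "\<dots> = (\<integral>\<^sup>+a. emeasure M (Z a) * emeasure M UNIV \<partial>M)"
  proof (intro nn_integral_cong)
    fix a
    have eq: "Pair a -` ?E = UNIV \<times> Z a" by (auto simp: Z_def)
    have "emeasure (M \<Otimes>\<^sub>M M) (Pair a -` ?E) = emeasure M UNIV * emeasure M (Z a)"
      unfolding eq by (rule sigma_finite_measure.emeasure_pair_measure_Times[OF M_sf]) simp_all
    then show "emeasure (M \<Otimes>\<^sub>M M) (Pair a -` ?E) = emeasure M (Z a) * emeasure M UNIV"
      by (simp only: mult.commute)
  qed
  finally show ?thesis using N_aux by simp
qed

lemma N2: "emeasure M3 {(a,b,c). cr (b-p0) (c-p0) = 0} = 0"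
proof -
  let ?E = "{(a,b,c). cr (b-p0) (c-p0) = 0}"
  let ?F = "{(b,c). cr (b-p0) (c-p0) = 0}"
  have Es: "?E \<in> sets M3"
  proof -
    have "?E = {t \<in> space M3. cr (fst (snd t) - p0) (snd (snd t) - p0) = 0}" by (auto simp: space_pair_measure)
    also have "\<dots> \<in> sets M3" by measurable
    finally show ?thesis .
  qed
  have Fs: "?F \<in> sets (M \<Otimes>\<^sub>M M)"
  proof -
    have "?F = {t \<in> space (M \<Otimes>\<^sub>M M). cr (fst t - p0) (snd t - p0) = 0}" by (auto simp: space_pair_measure)
    also have "\<dots> \<in> sets (M \<Otimes>\<^sub>M M)" by measurable
    finally show ?thesis .
  qed
  have F0: "emeasure (M \<Otimes>\<^sub>M M) ?F = 0"
  proof -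
    have "emeasure (M \<Otimes>\<^sub>M M) ?F = (\<integral>\<^sup>+b. emeasure M (Pair b -` ?F) \<partial>M)"
      by (rule sigma_finite_measure.emeasure_pair_measure_alt[OF M_sf Fs])
    also have "\<dots> = (\<integral>\<^sup>+b. emeasure M (Z b) * 1 \<partial>M)"
      by (intro nn_integral_cong) (auto simp: Z_def vimage_def)
    finally show ?thesis using N_aux[of 1] by simp
  qed
  have "emeasure M3 ?E = (\<integral>\<^sup>+a. emeasure (M \<Otimes>\<^sub>M M) (Pair a -` ?E) \<partial>M)"
    by (rule sigma_finite_measure.emeasure_pair_measure_alt[OF MM_sf Es])
  also have "\<dots> = (\<integral>\<^sup>+a. 0 \<partial>M)"
  proof (intro nn_integral_cong)
    fix a
    have "Pair a -` ?E = ?F" by auto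
    then show "emeasure (M \<Otimes>\<^sub>M M) (Pair a -` ?E) = 0" using F0 by simp
  qed
  finally show ?thesis by simp
qed

lemma cr_anti: "cr y x = - cr x y" unfolding cr_def by simp

lemma tri: "triangle_prob R p0 = 1 - 3 * enn2real Iint"
proof -
  interpret P3: prob_space M3 by (intro prob_space_pair M_prob)
  define T where "T = ({(a,b,c). p0 \<in> convex hull {a, b, c}} :: ((real\<times>real)\<times>(real\<times>real)\<times>(real\<times>real)) set)"
  define E1 where "E1 = ({(a,b,c). cr (a-p0) (b-p0) > 0 \<and> cr (a-p0) (c-p0) > 0} :: ((real\<times>real)\<times>(real\<times>real)\<times>(real\<times>real)) set)"
  define E2 where "E2 = ({(a,b,c). cr (b-p0) (c-p0) > 0 \<and> cr (b-p0) (a-p0) > 0} :: ((real\<times>real)\<times>(real\<times>real)\<times>(real\<times>real)) set)"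
  define E3 where "E3 = ({(a,b,c). cr (c-p0) (a-p0) > 0 \<and> cr (c-p0) (b-p0) > 0} :: ((real\<times>real)\<times>(real\<times>real)\<times>(real\<times>real)) set)"
  define N1 where "N1 = ({(a,b,c). cr (a-p0) (b-p0) = 0} :: ((real\<times>real)\<times>(real\<times>real)\<times>(real\<times>real)) set)"
  define N2 where "N2 = ({(a,b,c). cr (b-p0) (c-p0) = 0} :: ((real\<times>real)\<times>(real\<times>real)\<times>(real\<times>real)) set)"
  define N3 where "N3 = ({(a,b,c). cr (a-p0) (c-p0) = 0} :: ((real\<times>real)\<times>(real\<times>real)\<times>(real\<times>real)) set)"
  have tp: "triangle_prob R p0 = measure M3 T" unfolding triangle_prob_def Let_def T_def ..
  have Ts: "T \<in> sets M3"
  proof -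
    have "T = {t. p0 \<in> convex hull {fst t, fst (snd t), snd (snd t)}}" unfolding T_def by auto
    then show ?thesis using T_borel[of p0] sets_M3 by simp
  qed
  have E1s: "E1 \<in> sets M3"
  proof -
    have "E1 = {t \<in> space M3. 0 < cr (fst t - p0) (fst (snd t) - p0) \<and> 0 < cr (fst t - p0) (snd (snd t) - p0)}"
      unfolding E1_def by (auto simp: space_pair_measure)
    also have "\<dots> \<in> sets M3" by measurable
    finally show ?thesis .
  qed
  have E2s: "E2 \<in> sets M3"
  proof -
    have "E2 = {t \<in> space M3. 0 < cr (fst (snd t) - p0) (snd (snd t) - p0) \<and> 0 < cr (fst (snd t) - p0) (fst t - p0)}"
      unfolding E2_def by (auto simp: space_pair_measure)
    also have "\<dots> \<in> sets M3" by measurable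
    finally show ?thesis .
  qed
  have E3s: "E3 \<in> sets M3"
  proof -
    have "E3 = {t \<in> space M3. 0 < cr (snd (snd t) - p0) (fst t - p0) \<and> 0 < cr (snd (snd t) - p0) (fst (snd t) - p0)}"
      unfolding E3_def by (auto simp: space_pair_measure)
    also have "\<dots> \<in> sets M3" by measurable
    finally show ?thesis .
  qed
  have Ns: "N1 \<union> N2 \<union> N3 \<in> sets M3"
  proof -
    have "N1 \<union> N2 \<union> N3 = {t \<in> space M3. cr (fst t - p0) (fst (snd t) - p0) = 0 \<or>
       cr (fst (snd t) - p0) (snd (snd t) - p0) = 0 \<or> cr (fst t - p0) (snd (snd t) - p0) = 0}"
      unfolding N1_def N2_def N3_def by (auto simp: space_pair_measure)
    also have "\<dots> \<in> sets M3" by measurable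
    finally show ?thesis .
  qed
  have mE: "measure M3 E1 = enn2real Iint" "measure M3 E2 = enn2real Iint" "measure M3 E3 = enn2real Iint"
    unfolding measure_def E1_def E2_def E3_def using E1 E2 E3 by simp_all
  have mN: "measure M3 (N1 \<union> N2 \<union> N3) = 0"
  proof -
    have "emeasure M3 (N1 \<union> N2 \<union> N3) \<le> emeasure M3 N1 + emeasure M3 N2 + emeasure M3 N3"
    proof -
      have s1: "N1 \<in> sets M3" "N2 \<in> sets M3" "N3 \<in> sets M3"
      proof -
        have "N1 = {t \<in> space M3. cr (fst t - p0) (fst (snd t) - p0) = 0}" unfolding N1_def by (auto simp: space_pair_measure)
        also have "\<dots> \<in> sets M3" by measurable
        finally show "N1 \<in> sets M3" .
        have "N2 = {t \<in> space M3. cr (fst (snd t) - p0) (snd (snd t) - p0) = 0}" unfolding N2_def by (auto simp: space_pair_measure)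
        also have "\<dots> \<in> sets M3" by measurable
        finally show "N2 \<in> sets M3" .
        have "N3 = {t \<in> space M3. cr (fst t - p0) (snd (snd t) - p0) = 0}" unfolding N3_def by (auto simp: space_pair_measure)
        also have "\<dots> \<in> sets M3" by measurable
        finally show "N3 \<in> sets M3" .
      qed
      have "emeasure M3 (N1 \<union> N2 \<union> N3) \<le> emeasure M3 (N1 \<union> N2) + emeasure M3 N3"
        using s1 by (intro emeasure_subadditive) auto
      also have "emeasure M3 (N1 \<union> N2) \<le> emeasure M3 N1 + emeasure M3 N2"
        using s1 by (intro emeasure_subadditive) auto
      finally show ?thesis by (simp add: add_right_mono)
    qed
    then have "emeasure M3 (N1 \<union> N2 \<union> N3) = 0"
      using N1 N2 N3 unfolding N1_def N2_def N3_def by simp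
    then show ?thesis by (simp add: measure_def)
  qed
  have nT: "x \<notin> T" if "x \<in> E1 \<union> E2 \<union> E3" for x
  proof -
    obtain a b c where x: "x = (a, b, c)" by (cases x) auto
    have 1: "{b, c, a} = {a, b, c}" "{c, a, b} = {a, b, c}" by auto
    show ?thesis
      using that geo_out[of "a-p0" "b-p0" "c-p0"] hull_iff[of p0 a b c]
        geo_out[of "b-p0" "c-p0" "a-p0"] hull_iff[of p0 b c a]
        geo_out[of "c-p0" "a-p0" "b-p0"] hull_iff[of p0 c a b]
      unfolding x T_def E1_def E2_def E3_def 1 by auto
  qed
  have dT: "T \<inter> (E1 \<union> E2 \<union> E3) = {}" using nT by blast
  have d12: "E1 \<inter> E2 = {}" "(E1 \<union> E2) \<inter> E3 = {}"
    unfolding E1_def E2_def E3_def by (auto simp: cr_def algebra_simps)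
  have cov: "space M3 - (T \<union> E1 \<union> E2 \<union> E3) \<subseteq> N1 \<union> N2 \<union> N3"
  proof
    fix x assume x: "x \<in> space M3 - (T \<union> E1 \<union> E2 \<union> E3)"
    obtain a b c where xe: "x = (a, b, c)" by (cases x) auto
    show "x \<in> N1 \<union> N2 \<union> N3"
    proof (rule ccontr)
      assume "x \<notin> N1 \<union> N2 \<union> N3"
      with x have "\<exists>u v w. 0 \<le> u \<and> 0 \<le> v \<and> 0 \<le> w \<and> u + v + w = 1 \<and> u *\<^sub>R (a-p0) + v *\<^sub>R (b-p0) + w *\<^sub>R (c-p0) = 0"
        unfolding xe by (intro geo_in) (auto simp: E1_def E2_def E3_def N1_def N2_def N3_def)
      then have "x \<in> T" unfolding xe T_def hull_iff by simp
      with x show False by simp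
    qed
  qed
  have U: "measure M3 (T \<union> E1 \<union> E2 \<union> E3) = measure M3 T + measure M3 E1 + measure M3 E2 + measure M3 E3"
  proof -
    have "measure M3 (T \<union> (E1 \<union> E2 \<union> E3)) = measure M3 T + measure M3 (E1 \<union> E2 \<union> E3)"
      using Ts E1s E2s E3s dT by (intro P3.finite_measure_Union) auto
    also have "measure M3 (E1 \<union> E2 \<union> E3) = measure M3 (E1 \<union> E2) + measure M3 E3"
      using E1s E2s E3s d12 by (intro P3.finite_measure_Union) auto
    also have "measure M3 (E1 \<union> E2) = measure M3 E1 + measure M3 E2"
      using E1s E2s d12 by (intro P3.finite_measure_Union) auto
    finally show ?thesis by (simp add: Un_assoc add_ac)
  qed
  have one: "measure M3 (T \<union> E1 \<union> E2 \<union> E3) = 1"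
  proof -
    have s: "T \<union> E1 \<union> E2 \<union> E3 \<in> sets M3" using Ts E1s E2s E3s by auto
    have "measure M3 (space M3 - (T \<union> E1 \<union> E2 \<union> E3)) \<le> measure M3 (N1 \<union> N2 \<union> N3)"
      using cov Ns by (intro P3.finite_measure_mono) auto
    then have "measure M3 (space M3 - (T \<union> E1 \<union> E2 \<union> E3)) = 0" using mN measure_nonneg[of M3] by (simp add: order_antisym)
    then show ?thesis using P3.prob_compl[OF s] by simp
  qed
  show ?thesis using U one mE tp by simp
qed

end

context setting2
begin

lemma half_area_H: "half_area r \<theta> = H \<theta>"
  unfolding half_area_def H_def f_def by (simp add: integral_divide)

lemma f_contU: "continuous_on UNIV f" by (rule f_cont)

lemma minimizer:
  obtains \<theta>0 where "\<theta>0 \<in> {0..2*pi}" "(INF \<theta>\<in>{0..2*pi}. half_area r \<theta>) = H \<theta>0" "\<And>\<theta>. H \<theta>0 \<le> H \<theta>"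
proof -
  obtain \<theta>0 where t0: "\<theta>0 \<in> {0..2*pi}" and mn: "\<forall>y\<in>{0..2*pi}. H \<theta>0 \<le> H y"
    using continuous_attains_inf[of "{0..2*pi}" H] H_cont[of 0 "2*pi"] by auto
  have inf: "(INF \<theta>\<in>{0..2*pi}. half_area r \<theta>) = H \<theta>0"
    unfolding half_area_H using t0 mn by (intro cInf_eq_minimum) auto
  have "H \<theta>0 \<le> H \<theta>" for \<theta>
  proof -
    define k where "k = \<lfloor>\<theta> / (2*pi)\<rfloor>"
    define \<phi> where "\<phi> = \<theta> - 2*pi*real_of_int k"
    have "real_of_int k \<le> \<theta> / (2*pi)" "\<theta> / (2*pi) < real_of_int k + 1" unfolding k_def by linarith+
    then have \<phi>: "0 \<le> \<phi>" "\<phi> \<le> 2*pi" unfolding \<phi>_def by (simp_all add: field_simps)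
    have "H \<theta> = H (\<phi> + 2*pi*real_of_int k)" unfolding \<phi>_def by simp
    also have "\<dots> = H \<phi>" by (rule per_int[where h=H, OF H_periodic])
    finally show ?thesis using mn \<phi> by simp
  qed
  then show ?thesis using that t0 inf by blast
qed

lemma J_bounds:
  assumes t0: "\<theta>0 \<ge> 0" and mn: "\<And>\<theta>. H \<theta>0 \<le> H \<theta>"
  defines "h \<equiv> H \<theta>0"
  defines "J \<equiv> integral {\<theta>0..\<theta>0+2*pi} (\<lambda>\<theta>. f \<theta> * (H \<theta>)\<^sup>2)"
  shows "h/2 + ((1-h)^3 - h^3)/3 \<le> J" "J \<le> h * (h\<^sup>2 + (1-h)\<^sup>2) + ((1-h)^3 - h^3)/3"
proof -
  have ctH: "continuous_on {a..b} H" if "a \<ge> 0" for a b using H_cont[of a b] that by simp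
  let ?g = "\<lambda>\<theta>. f \<theta> * (H \<theta>)\<^sup>2"
  have cg: "continuous_on {a..b} ?g" if "a \<ge> 0" for a b using that by (intro continuous_intros f_cont ctH)
  have J1: "J = integral {\<theta>0..\<theta>0+pi} ?g + integral {\<theta>0+pi..\<theta>0+2*pi} ?g"
    unfolding J_def using t0
    by (intro Henstock_Kurzweil_Integration.integral_combine[symmetric] integrable_continuous_interval cg) auto
  have "integral {\<theta>0+pi..\<theta>0+2*pi} ?g = integral {\<theta>0..\<theta>0+pi} (?g \<circ> ((+) pi))"
    using integral_shift_Icc_real[of \<theta>0 "\<theta>0+pi" ?g pi] by (simp add: add_ac)
  also have "\<dots> = integral {\<theta>0..\<theta>0+pi} (\<lambda>\<psi>. f (\<psi> + pi) * (1 - H \<psi>)\<^sup>2)"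
    by (intro integral_cong) (simp add: H_compl add_ac)
  finally have J2: "J = integral {\<theta>0..\<theta>0+pi} ?g + integral {\<theta>0..\<theta>0+pi} (\<lambda>\<psi>. f (\<psi> + pi) * (1 - H \<psi>)\<^sup>2)"
    using J1 by simp
  have cfp: "continuous_on S (\<lambda>\<psi>. f (\<psi> + pi))" for S
    by (rule continuous_on_compose2[OF f_contU]) (auto intro!: continuous_intros)
  let ?q1 = "\<lambda>\<psi>. f \<psi> * ((H \<psi>)\<^sup>2 + (1 - H \<psi>)\<^sup>2)"
  let ?q2 = "\<lambda>\<psi>. (1 - H \<psi>)\<^sup>2 * (f (\<psi> + pi) - f \<psi>)"
  have eqi: "integral {\<theta>0..\<theta>0+pi} ?g + integral {\<theta>0..\<theta>0+pi} (\<lambda>\<psi>. f (\<psi> + pi) * (1 - H \<psi>)\<^sup>2) =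
     integral {\<theta>0..\<theta>0+pi} ?q1 + integral {\<theta>0..\<theta>0+pi} ?q2"
  proof -
    have i1: "?g integrable_on {\<theta>0..\<theta>0+pi}" using t0 by (intro integrable_continuous_interval cg)
    have i2: "(\<lambda>\<psi>. f (\<psi> + pi) * (1 - H \<psi>)\<^sup>2) integrable_on {\<theta>0..\<theta>0+pi}"
      using t0 by (intro integrable_continuous_interval continuous_intros cfp ctH)
    have i3: "?q1 integrable_on {\<theta>0..\<theta>0+pi}" using t0 by (intro integrable_continuous_interval continuous_intros f_cont ctH)
    have i4: "?q2 integrable_on {\<theta>0..\<theta>0+pi}" using t0 by (intro integrable_continuous_interval continuous_intros f_cont cfp ctH)
    have "integral {\<theta>0..\<theta>0+pi} ?g + integral {\<theta>0..\<theta>0+pi} (\<lambda>\<psi>. f (\<psi> + pi) * (1 - H \<psi>)\<^sup>2) =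
        integral {\<theta>0..\<theta>0+pi} (\<lambda>\<psi>. ?g \<psi> + f (\<psi> + pi) * (1 - H \<psi>)\<^sup>2)"
      using i1 i2 by (rule integral_add[symmetric])
    also have "\<dots> = integral {\<theta>0..\<theta>0+pi} (\<lambda>\<psi>. ?q1 \<psi> + ?q2 \<psi>)"
      by (intro integral_cong) (simp add: algebra_simps)
    also have "\<dots> = integral {\<theta>0..\<theta>0+pi} ?q1 + integral {\<theta>0..\<theta>0+pi} ?q2"
      using i3 i4 by (rule integral_add)
    finally show ?thesis .
  qed
  have ftc: "integral {\<theta>0..\<theta>0+pi} ?q2 = ((1-h)^3 - h^3)/3"
  proof -
    let ?G = "\<lambda>\<psi>. - ((1 - H \<psi>)^3) / 3"
    have "(?q2 has_integral (?G (\<theta>0+pi) - ?G \<theta>0)) {\<theta>0..\<theta>0+pi}"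
    proof (rule fundamental_theorem_of_calculus)
      show "\<theta>0 \<le> \<theta>0 + pi" by simp
      fix x assume x: "x \<in> {\<theta>0..\<theta>0+pi}"
      then have "x > -4" using t0 by auto
      then have "(?G has_real_derivative ?q2 x) (at x)"
        by (auto intro!: derivative_eq_intros H_deriv simp: power2_eq_square power3_eq_cube field_simps)
      then show "(?G has_vector_derivative ?q2 x) (at x within {\<theta>0..\<theta>0+pi})"
        by (simp add: has_real_derivative_iff_has_vector_derivative has_vector_derivative_at_within)
    qed
    then have "integral {\<theta>0..\<theta>0+pi} ?q2 = ?G (\<theta>0+pi) - ?G \<theta>0" by (rule integral_unique)
    also have "\<dots> = ((1-h)^3 - h^3)/3" unfolding h_def H_compl by (simp add: field_simps)
    finally show ?thesis .
  qed
  have Hrange: "h \<le> H \<psi>" "H \<psi> \<le> 1 - h" for \<psi>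
    using mn[of \<psi>] mn[of "\<psi> + pi"] H_compl[of \<psi>] unfolding h_def by auto
  have intf: "integral {\<theta>0..\<theta>0+pi} f = h" unfolding h_def H_def ..
  have i5: "f integrable_on {\<theta>0..\<theta>0+pi}" by (intro integrable_continuous_interval f_cont)
  have i3: "?q1 integrable_on {\<theta>0..\<theta>0+pi}" using t0 by (intro integrable_continuous_interval continuous_intros f_cont ctH)
  have lo: "h/2 \<le> integral {\<theta>0..\<theta>0+pi} ?q1"
  proof -
    have "integral {\<theta>0..\<theta>0+pi} (\<lambda>\<psi>. f \<psi> * (1/2)) \<le> integral {\<theta>0..\<theta>0+pi} ?q1"
    proof (rule integral_le)
      show "(\<lambda>\<psi>. f \<psi> * (1/2)) integrable_on {\<theta>0..\<theta>0+pi}" using i5 by (rule integrable_on_mult_left)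
      show "?q1 integrable_on {\<theta>0..\<theta>0+pi}" by (rule i3)
      fix x
      have "1/2 \<le> (H x)\<^sup>2 + (1 - H x)\<^sup>2"
      proof -
        have "(H x)\<^sup>2 + (1 - H x)\<^sup>2 = 2 * (H x - 1/2)\<^sup>2 + 1/2" by (simp add: power2_eq_square algebra_simps)
        then show ?thesis by simp
      qed
      then show "f x * (1/2) \<le> ?q1 x" using f_nonneg[of x] by (intro mult_left_mono) auto
    qed
    then show ?thesis using intf by (simp add: integral_mult_left)
  qed
  have hi: "integral {\<theta>0..\<theta>0+pi} ?q1 \<le> h * (h\<^sup>2 + (1-h)\<^sup>2)"
  proof -
    have "integral {\<theta>0..\<theta>0+pi} ?q1 \<le> integral {\<theta>0..\<theta>0+pi} (\<lambda>\<psi>. f \<psi> * (h\<^sup>2 + (1-h)\<^sup>2))"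
    proof (rule integral_le)
      show "(\<lambda>\<psi>. f \<psi> * (h\<^sup>2 + (1-h)\<^sup>2)) integrable_on {\<theta>0..\<theta>0+pi}" using i5 by (rule integrable_on_mult_left)
      show "?q1 integrable_on {\<theta>0..\<theta>0+pi}" by (rule i3)
      fix x
      have "(H x)\<^sup>2 + (1 - H x)\<^sup>2 \<le> h\<^sup>2 + (1-h)\<^sup>2"
      proof -
        have "(H x - h) * (H x - (1 - h)) \<le> 0" using Hrange[of x] by (intro mult_nonneg_nonpos) auto
        moreover have "(H x)\<^sup>2 + (1 - H x)\<^sup>2 - (h\<^sup>2 + (1-h)\<^sup>2) = 2 * ((H x - h) * (H x - (1 - h)))"
          by (simp add: power2_eq_square algebra_simps)
        ultimately show ?thesis by linarith
      qed
      then show "?q1 x \<le> f x * (h\<^sup>2 + (1-h)\<^sup>2)" using f_nonneg[of x] by (intro mult_left_mono) auto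
    qed
    then show ?thesis using intf by (simp add: integral_mult_left mult.commute)
  qed
  show "h/2 + ((1-h)^3 - h^3)/3 \<le> J" using J2 eqi ftc lo by simp
  show "J \<le> h * (h\<^sup>2 + (1-h)\<^sup>2) + ((1-h)^3 - h^3)/3" using J2 eqi ftc hi by simp
qed

end

theorem theorem3p3:
  fixes r :: "real \<Rightarrow> real" and p0 :: "real \<times> real"
  assumes pos: "\<And>\<theta>. r \<theta> > 0"
    and periodic: "\<And>\<theta>. r (\<theta> + 2 * pi) = r \<theta>"
    and cont: "continuous_on UNIV r"
    and pwd: "r piecewise_differentiable_on {0..2 * pi}"
    and interior: "p0 \<in> interior (polar_region r p0)"
    and area: "emeasure lborel (polar_region r p0) = 1"
  shows "1/4 - (1 + 4 * (INF \<theta>\<in>{0..2*pi}. half_area r \<theta>)) * (1/2 - (INF \<theta>\<in>{0..2*pi}. half_area r \<theta>))\<^sup>2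
           \<le> triangle_prob (polar_region r p0) p0
       \<and> triangle_prob (polar_region r p0) p0
           \<le> 1/4 - 2 * (1/2 - (INF \<theta>\<in>{0..2*pi}. half_area r \<theta>)) ^ 3"
proof -
  interpret S: setting2 r p0
    by unfold_locales (use pos periodic cont area in auto)
  obtain \<theta>0 where t0: "\<theta>0 \<in> {0..2*pi}" "(INF \<theta>\<in>{0..2*pi}. half_area r \<theta>) = S.H \<theta>0"
      "\<And>\<theta>. S.H \<theta>0 \<le> S.H \<theta>"
    using S.minimizer by blast
  define h where "h = S.H \<theta>0"
  define J where "J = integral {\<theta>0..\<theta>0+2*pi} (\<lambda>\<theta>. S.f \<theta> * (S.H \<theta>)\<^sup>2)"
  have J0: "J \<ge> 0" unfolding J_def
    using t0(1) by (intro integral_nonneg integrable_continuous_interval continuous_intros S.f_cont S.H_cont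
        mult_nonneg_nonneg S.f_nonneg) auto
  have "S.Iint = ennreal J" unfolding J_def using t0(1) by (intro S.I_real) auto
  then have tp: "triangle_prob (polar_region r p0) p0 = 1 - 3 * J" using S.tri J0 by simp
  have b1: "h/2 + ((1-h)^3 - h^3)/3 \<le> J" and b2: "J \<le> h * (h\<^sup>2 + (1-h)\<^sup>2) + ((1-h)^3 - h^3)/3"
    using S.J_bounds[of \<theta>0] t0 unfolding h_def J_def by auto
  have e1: "1/4 - (1 + 4 * h) * (1/2 - h)\<^sup>2 = 1 - 3 * (h * (h\<^sup>2 + (1-h)\<^sup>2) + ((1-h)^3 - h^3)/3)"
    by (simp add: power2_eq_square power3_eq_cube field_simps)
  have e2: "1/4 - 2 * (1/2 - h) ^ 3 = 1 - 3 * (h/2 + ((1-h)^3 - h^3)/3)"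
    by (simp add: power2_eq_square power3_eq_cube field_simps)
  have l1: "\<And>A. J \<le> A \<Longrightarrow> 1 - 3 * A \<le> 1 - 3 * J" by simp
  have l2: "\<And>B. B \<le> J \<Longrightarrow> 1 - 3 * J \<le> 1 - 3 * B" by simp
  show ?thesis unfolding t0(2) tp h_def[symmetric] e1 e2 using l1[OF b2] l2[OF b1] by blast
qed

end
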